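(* Let $x(n)$ be the Pólya urn process on $H$. Almost surely, the limit set of $(x(n))_{n\ge0}$ (its set of accumulation points) is a connected subset of $\Lambda$.
   Context: Let $H=(V,E)$ be a finite hypergraph with vertex set $V=[m]=\{1,\dots,m\}$ and a set $E$ of $N\ge 1$ hyperedges (nonempty subsets of $[m]$), such that every vertex belongs to at least one hyperedge. Pólya urn on $H$: initially vertex $i$ holds $B_i(0)\ge 1$ balls; $N_0=\sum_{i=1}^m B_i(0)$. At each step $n\ge 1$, for each hyperedge $I\in E$ (independently across hyperedges, conditionally on the past) one ball is added to a vertex $i\in I$ chosen with probability $B_i(n-1)/\sum_{j\in I}B_j(n-1)$, where $B_i(n)$ denotes the number of balls at vertex $i$ after step $n$. Put $x_i(n)=B_i(n)/(N_0+nN)$ and $x(n)=(x_1(n),\dots,x_m(n))$. For $v\in\mathbb R^m$ and $I\in E$, $v_I=\sum_{i\in I}v_i$. Fix $0<c<1/N$ and let $\Delta=\{x\in\mathbb R^m: x_i\ge0,\ \sum_i x_i=1,\ x_I\ge c\ \forall I\in E\}$. $F:\Delta\to\mathbb R^m$, $F_i(v)=-v_i+\frac1N\sum_{I\ni i}\frac{v_i}{v_I}$, and $\Lambda=\{v\in\Delta:F(v)=0\}$. *)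

theory Defs
  imports "HOL-Probability.Probability"
begin

text \<open>Vertices of the hypergraph are the elements of a finite type 'v (so m = CARD('v));
hyperedges form a set E of nonempty subsets of UNIV :: 'v set.
A history of choices is a function h :: nat \<Rightarrow> 'v set \<Rightarrow> 'v, where h n I is the vertex
of hyperedge I receiving the ball at step n (n \<ge> 1).\<close>

fun urn_count :: "('v \<Rightarrow> nat) \<Rightarrow> 'v set set \<Rightarrow> (nat \<Rightarrow> 'v set \<Rightarrow> 'v) \<Rightarrow> nat \<Rightarrow> 'v \<Rightarrow> nat" where
  "urn_count B0 E h 0 i = B0 i"
| "urn_count B0 E h (Suc n) i = urn_count B0 E h n i + card {I \<in> E. h (Suc n) I = i}"

text \<open>Probability under the P\'olya urn dynamics that the choices at steps 1..n are those
prescribed by the history h: at step k, independently over hyperedges I, vertex i \<in> I is chosen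
with probability B_i(k-1) / sum_{j\<in>I} B_j(k-1).\<close>
definition urn_path_prob :: "('v \<Rightarrow> nat) \<Rightarrow> 'v set set \<Rightarrow> (nat \<Rightarrow> 'v set \<Rightarrow> 'v) \<Rightarrow> nat \<Rightarrow> real" where
  "urn_path_prob B0 E h n =
     (\<Prod>k\<in>{1..n}. \<Prod>I\<in>E.
        (if h k I \<in> I
         then real (urn_count B0 E h (k - 1) (h k I)) / real (\<Sum>j\<in>I. urn_count B0 E h (k - 1) j)
         else 0))"

definition urn_x :: "('v::finite \<Rightarrow> nat) \<Rightarrow> 'v set set \<Rightarrow> (nat \<Rightarrow> 'v set \<Rightarrow> 'v) \<Rightarrow> nat \<Rightarrow> real ^ 'v" where
  "urn_x B0 E h n = (\<chi> i. real (urn_count B0 E h n i) / (real (\<Sum>j\<in>UNIV. B0 j) + real n * real (card E)))"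

definition vsum :: "real ^ 'v \<Rightarrow> 'v set \<Rightarrow> real" where
  "vsum v I = (\<Sum>i\<in>I. v $ i)"

definition Delta :: "'v set set \<Rightarrow> real \<Rightarrow> (real ^ 'v::finite) set" where
  "Delta E c = {x. (\<forall>i. x $ i \<ge> 0) \<and> (\<Sum>i\<in>UNIV. x $ i) = 1 \<and> (\<forall>I\<in>E. vsum x I \<ge> c)}"

definition urnF :: "'v set set \<Rightarrow> real ^ 'v \<Rightarrow> real ^ 'v" where
  "urnF E v = (\<chi> i. - v $ i + (1 / real (card E)) * (\<Sum>I\<in>{I\<in>E. i \<in> I}. v $ i / vsum v I))"

definition Lambda :: "'v set set \<Rightarrow> real \<Rightarrow> (real ^ 'v::finite) set" where
  "Lambda E c = {v \<in> Delta E c. urnF E v = 0}"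

definition limit_set :: "(nat \<Rightarrow> 'a::topological_space) \<Rightarrow> 'a set" where
  "limit_set X = {p. \<exists>r. strict_mono r \<and> (X \<circ> r) \<longlonglongrightarrow> p}"

end

theory Submission
  imports Defs "HOL-Analysis.Harmonic_Numbers"
begin

lemma limit_set_char:
  fixes X :: "nat \<Rightarrow> 'a::metric_space"
  shows "p \<in> limit_set X \<longleftrightarrow> (\<forall>e>0. \<forall>m. \<exists>n\<ge>m. dist (X n) p < e)"
proof
  assume "p \<in> limit_set X"
  then obtain r where r: "strict_mono r" "(X \<circ> r) \<longlonglongrightarrow> p" unfolding limit_set_def by auto
  show "\<forall>e>0. \<forall>m. \<exists>n\<ge>m. dist (X n) p < e"
  proof (intro allI impI)
    fix e :: real and m assume e: "e > 0"
    from r(2) e have "eventually (\<lambda>k. dist (X (r k)) p < e) sequentially"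
      unfolding tendsto_iff by (auto simp: comp_def)
    then obtain k0 where k0: "\<And>k. k \<ge> k0 \<Longrightarrow> dist (X (r k)) p < e"
      unfolding eventually_sequentially by auto
    have "r (max k0 m) \<ge> m" using seq_suble[OF r(1), of "max k0 m"] by linarith
    then show "\<exists>n\<ge>m. dist (X n) p < e" using k0[of "max k0 m"] by auto
  qed
next
  assume H: "\<forall>e>0. \<forall>m. \<exists>n\<ge>m. dist (X n) p < e"
  define f where "f k i = (SOME n. n \<ge> Suc i \<and> dist (X n) p < inverse (real (Suc k)))" for k i
  have f: "f k i \<ge> Suc i \<and> dist (X (f k i)) p < inverse (real (Suc k))" for k i
  proof -
    have "\<exists>n\<ge>Suc i. dist (X n) p < inverse (real (Suc k))" using H by auto
    then show ?thesis unfolding f_def by (rule someI_ex)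
  qed
  define r where "r = rec_nat (f 0 0) (\<lambda>k i. f (Suc k) i)"
  have r0: "r 0 = f 0 0" and rS: "r (Suc k) = f (Suc k) (r k)" for k by (simp_all add: r_def)
  have smono: "strict_mono r"
    unfolding strict_mono_Suc_iff using f rS by (metis Suc_le_lessD)
  have rd: "dist (X (r k)) p < inverse (real (Suc k))" for k
  proof (cases k)
    case 0 then show ?thesis using f[of 0 0] r0 by simp
  next
    case (Suc k') then show ?thesis using f[where k="Suc k'" and i="r k'"] rS[of k'] by simp
  qed
  have "(X \<circ> r) \<longlonglongrightarrow> p"
    unfolding tendsto_iff
  proof (intro allI impI)
    fix e :: real assume e: "e > 0"
    obtain k0 where k0: "k0 > 0" "inverse (real k0) < e" using ex_inverse_of_nat_less[OF e] by auto
    show "eventually (\<lambda>k. dist ((X \<circ> r) k) p < e) sequentially"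
      unfolding eventually_sequentially
    proof (intro exI allI impI)
      fix k assume "k \<ge> k0"
      then have "inverse (real (Suc k)) \<le> inverse (real k0)" using k0
        by (intro le_imp_inverse_le) auto
      then have "dist (X (r k)) p < e" using rd[of k] k0(2) by linarith
      then show "dist ((X \<circ> r) k) p < e" by simp
    qed
  qed
  then show "p \<in> limit_set X" using smono unfolding limit_set_def by auto
qed

lemma limit_set_closed:
  fixes X :: "nat \<Rightarrow> 'a::metric_space"
  shows "closed (limit_set X)"
proof -
  have "p \<in> limit_set X" if H: "\<forall>e>0. \<exists>y\<in>limit_set X. dist y p < e" for p
    unfolding limit_set_char
  proof (intro allI impI)
    fix e :: real and m assume e: "e > 0"
    then obtain y where y: "y \<in> limit_set X" "dist y p < e/2" using H by (meson half_gt_zero)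
    then obtain n where "n \<ge> m" "dist (X n) y < e/2" using e unfolding limit_set_char by (meson half_gt_zero)
    then show "\<exists>n\<ge>m. dist (X n) p < e" using y dist_triangle_half_l by (metis dist_commute)
  qed
  then show ?thesis
    unfolding closed_limpt islimpt_approachable by blast
qed

lemma discrete_ivt:
  assumes "P n1" "\<not> P n2" "n1 \<le> n2"
  shows "\<exists>j. n1 \<le> j \<and> j < n2 \<and> P j \<and> \<not> P (Suc j)"
  using assms
proof (induction n2)
  case 0 then show ?case by auto
next
  case (Suc n)
  show ?case
  proof (cases "P n")
    case True then show ?thesis using Suc.prems by (intro exI[of _ n]) (auto simp: le_Suc_eq)
  next
    case False
    then have "n1 \<le> n" using Suc.prems by (metis le_Suc_eq)
    then show ?thesis using Suc.IH[OF Suc.prems(1) False] by auto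
  qed
qed

lemma infdist_lower:
  assumes "A \<noteq> {}" "\<forall>y\<in>A. d \<le> dist x y"
  shows "d \<le> infdist x A"
  unfolding infdist_def using assms by (auto intro: cINF_greatest)

lemma limit_set_connected:
  fixes X :: "nat \<Rightarrow> 'a::heine_borel"
  assumes bd: "bounded (range X)" and st: "(\<lambda>n. dist (X (Suc n)) (X n)) \<longlonglongrightarrow> 0"
  shows "connected (limit_set X)"
proof -
  let ?S = "limit_set X"
  have Scl: "?S \<subseteq> closure (range X)"
  proof
    fix p assume "p \<in> ?S"
    then have "\<forall>e>0. \<exists>n. dist (X n) p < e" unfolding limit_set_char by blast
    then show "p \<in> closure (range X)" unfolding closure_approachable by blast
  qed
  have Sbd: "bounded ?S" using bounded_subset[OF bounded_closure[OF bd] Scl] .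
  show ?thesis
  proof (subst connected_closed_set[OF limit_set_closed], rule notI)
    assume "\<exists>A B. closed A \<and> closed B \<and> A \<noteq> {} \<and> B \<noteq> {} \<and> A \<union> B = ?S \<and> A \<inter> B = {}"
    then obtain A B where AB: "closed A" "closed B" "A \<noteq> {}" "B \<noteq> {}" "A \<union> B = ?S" "A \<inter> B = {}"
      by blast
    have "A \<subseteq> ?S" using AB(5) by blast
    then have "bounded A" using Sbd bounded_subset by blast
    then have "compact A" using AB(1) compact_eq_bounded_closed by blast
    then obtain d where d: "d > 0" "\<forall>x\<in>A. \<forall>y\<in>B. d \<le> dist x y"
      using separate_compact_closed[of A B] AB by blast
    define \<phi> where "\<phi> y = infdist y A - infdist y B" for y
    have phiA: "\<phi> a \<le> - d" if "a \<in> A" for a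
    proof -
      have "d \<le> infdist a B" using d that AB(4) by (intro infdist_lower) auto
      then show ?thesis unfolding \<phi>_def using that by simp
    qed
    have phiB: "\<phi> b \<ge> d" if "b \<in> B" for b
    proof -
      have "d \<le> infdist b A" using d that AB(3) by (intro infdist_lower) (auto simp: dist_commute)
      then show ?thesis unfolding \<phi>_def using that by simp
    qed
    have lip: "\<bar>\<phi> y - \<phi> z\<bar> \<le> 2 * dist y z" for y z
      using infdist_triangle_abs[of y A z] infdist_triangle_abs[of y B z] unfolding \<phi>_def by linarith
    obtain a where a: "a \<in> A" using AB by auto
    obtain b where b: "b \<in> B" using AB by auto
    have aS: "a \<in> ?S" and bS: "b \<in> ?S" using a b AB by auto
    have freqA: "\<exists>n\<ge>m. \<phi> (X n) \<le> - d/2" for m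
    proof -
      have "d/4 > 0" using d by simp
      then obtain n where "n \<ge> m" "dist (X n) a < d/4" using aS unfolding limit_set_char by blast
      then show ?thesis using lip[of "X n" a] phiA[OF a] by (intro exI[of _ n]) auto
    qed
    have freqB: "\<exists>n\<ge>m. \<phi> (X n) \<ge> d/2" for m
    proof -
      have "d/4 > 0" using d by simp
      then obtain n where "n \<ge> m" "dist (X n) b < d/4" using bS unfolding limit_set_char by blast
      then show ?thesis using lip[of "X n" b] phiB[OF b] by (intro exI[of _ n]) auto
    qed
    have "d/4 > 0" using d by simp
    from st[unfolded LIMSEQ_def, rule_format, OF this] obtain m0 where m0: "\<And>n. n \<ge> m0 \<Longrightarrow> dist (X (Suc n)) (X n) < d/4"
      by (auto simp: dist_real_def)
    have mid: "\<exists>n\<ge>m. \<bar>\<phi> (X n)\<bar> \<le> d/2" for m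
    proof -
      obtain n1 where n1: "n1 \<ge> max m m0" "\<phi> (X n1) \<le> - d/2" using freqA by blast
      obtain n2 where n2: "n2 \<ge> n1" "\<phi> (X n2) \<ge> d/2" using freqB by blast
      have "\<not> \<phi> (X n2) \<le> - d/2" using n2 d by linarith
      then obtain j where j: "n1 \<le> j" "j < n2" "\<phi> (X j) \<le> - d/2" "\<not> \<phi> (X (Suc j)) \<le> - d/2"
        using discrete_ivt[of "\<lambda>j. \<phi> (X j) \<le> - d/2" n1 n2] n1 n2 by blast
      have "dist (X (Suc j)) (X j) < d/4" using m0 j n1 by auto
      then have "\<bar>\<phi> (X (Suc j)) - \<phi> (X j)\<bar> < d/2" using lip[of "X (Suc j)" "X j"] by linarith
      then show ?thesis using j n1 by (intro exI[of _ "Suc j"]) auto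
    qed
    define nn where "nn k = (SOME n. n \<ge> k \<and> \<bar>\<phi> (X n)\<bar> \<le> d/2)" for k
    have nn: "nn k \<ge> k \<and> \<bar>\<phi> (X (nn k))\<bar> \<le> d/2" for k
      unfolding nn_def using mid[of k] by (rule someI_ex)
    have "bounded (range (X \<circ> nn))" using bd by (rule bounded_subset) auto
    then obtain l r where lr: "strict_mono r" "((X \<circ> nn) \<circ> r) \<longlonglongrightarrow> l"
      using bounded_imp_convergent_subsequence by blast
    have lS: "l \<in> ?S" unfolding limit_set_char
    proof (intro allI impI)
      fix e :: real and m assume e: "e > 0"
      from lr(2) e obtain k0 where k0: "\<And>k. k \<ge> k0 \<Longrightarrow> dist (X (nn (r k))) l < e"
        unfolding LIMSEQ_def by auto
      have "nn (r (max k0 m)) \<ge> m" using nn[of "r (max k0 m)"] seq_suble[OF lr(1), of "max k0 m"] by linarith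
      then show "\<exists>n\<ge>m. dist (X n) l < e" using k0[of "max k0 m"] by auto
    qed
    have "(\<lambda>k. \<phi> (X (nn (r k)))) \<longlonglongrightarrow> \<phi> l"
      unfolding \<phi>_def using lr(2) by (intro tendsto_intros) (auto simp: comp_def)
    then have "(\<lambda>k. \<bar>\<phi> (X (nn (r k)))\<bar>) \<longlonglongrightarrow> \<bar>\<phi> l\<bar>" by (rule tendsto_rabs)
    then have "\<bar>\<phi> l\<bar> \<le> d/2" using nn by (intro LIMSEQ_le_const2) auto
    moreover have "\<bar>\<phi> l\<bar> \<ge> d"
    proof -
      have "l \<in> A \<or> l \<in> B" using lS AB(5) by blast
      then show ?thesis using phiA[of l] phiB[of l] d by auto
    qed
    ultimately show False using d by linarith
  qed
qed

lemma card_split_sum: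
  fixes E :: "('v::finite) set set" and f :: "'v set \<Rightarrow> 'v"
  shows "(\<Sum>i\<in>I. card {J\<in>E. f J = i}) = card {J\<in>E. f J \<in> I}"
proof -
  have "{J\<in>E. f J \<in> I} = (\<Union>i\<in>I. {J\<in>E. f J = i})" by auto
  moreover have "card (\<Union>i\<in>I. {J\<in>E. f J = i}) = (\<Sum>i\<in>I. card {J\<in>E. f J = i})"
    by (rule card_UN_disjoint) auto
  ultimately have "card {J\<in>E. f J \<in> I} = (\<Sum>i\<in>I. card {J\<in>E. f J = i})" by simp
  then show ?thesis by simp
qed

locale urn =
  fixes B0 :: "'v::finite \<Rightarrow> nat" and E :: "'v set set"
  assumes E_ne: "E \<noteq> {}" and I_ne: "\<forall>I\<in>E. I \<noteq> {}" and B0_pos: "\<forall>i. B0 i \<ge> 1"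
begin

abbreviation cnt where "cnt \<equiv> urn_count B0 E"
definition NN :: real where "NN = real (card E)"
definition N0 :: real where "N0 = real (\<Sum>j\<in>UNIV. B0 j)"
definition tt :: "nat \<Rightarrow> real" where "tt n = N0 + real n * NN"
definition good :: "(nat \<Rightarrow> 'v set \<Rightarrow> 'v) \<Rightarrow> nat \<Rightarrow> bool" where
  "good h n \<longleftrightarrow> (\<forall>k\<in>{1..n}. \<forall>I\<in>E. h k I \<in> I)"
definition del :: real where "del = 1 / (N0 + NN)"

lemma finE: "finite E" by simp

lemma NN_ge1: "NN \<ge> 1"
  using E_ne unfolding NN_def by (simp add: Suc_leI card_gt_0_iff)

lemma N0_ge1: "N0 \<ge> 1"
proof -
  obtain i :: 'v where True by simp
  have "B0 i \<le> (\<Sum>j\<in>UNIV. B0 j)" by (rule member_le_sum) auto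
  then have "1 \<le> (\<Sum>j\<in>UNIV. B0 j)" using B0_pos by (metis le_trans)
  then show ?thesis unfolding N0_def by (metis of_nat_1 of_nat_le_iff)
qed

lemma tt_pos: "tt n > 0" unfolding tt_def using N0_ge1 NN_ge1 by (simp add: add_pos_nonneg)

lemma tt_Suc: "tt (Suc n) = tt n + NN" unfolding tt_def by (simp add: algebra_simps)

lemma tt_ge: "tt (Suc n) \<ge> real (Suc n)"
proof -
  have "real (Suc n) * NN \<ge> real (Suc n)" using NN_ge1 by simp
  then show ?thesis unfolding tt_def using N0_ge1 by linarith
qed

lemma del_pos: "del > 0" and del_le1: "del \<le> 1"
  unfolding del_def using N0_ge1 NN_ge1 by auto

lemma cnt_total: "(\<Sum>i\<in>UNIV. real (cnt h n i)) = tt n"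
proof (induction n)
  case 0 then show ?case unfolding tt_def N0_def by simp
next
  case (Suc n)
  have "(\<Sum>i\<in>UNIV. card {I\<in>E. h (Suc n) I = i}) = card E"
    using card_split_sum[where I=UNIV and E=E and f="h (Suc n)"] by simp
  then have "(\<Sum>i\<in>UNIV. real (card {I\<in>E. h (Suc n) I = i})) = NN"
    unfolding NN_def by (simp only: of_nat_sum[symmetric])
  then show ?case using Suc by (simp add: sum.distrib tt_Suc)
qed

lemma cnt_dep:
  assumes "\<forall>k\<in>{1..n}. \<forall>I\<in>E. h k I = h' k I"
  shows "cnt h n = cnt h' n"
  using assms
proof (induction n)
  case 0 then show ?case by (simp add: fun_eq_iff)
next
  case (Suc n)
  have "cnt h n = cnt h' n" using Suc by auto
  moreover have "{I\<in>E. h (Suc n) I = i} = {I\<in>E. h' (Suc n) I = i}" for i using Suc.prems by auto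
  ultimately show ?case by (simp add: fun_eq_iff)
qed

lemma good_mono: "good h n \<Longrightarrow> m \<le> n \<Longrightarrow> good h m"
  unfolding good_def by auto

lemma cnt_edge_ge:
  assumes "good h n" "I \<in> E"
  shows "(\<Sum>i\<in>I. real (cnt h n i)) \<ge> real n + 1"
  using assms
proof (induction n)
  case 0
  obtain i where "i \<in> I" using I_ne 0 by auto
  then have "real (B0 i) \<le> (\<Sum>i\<in>I. real (B0 i))" by (intro member_le_sum) auto
  then show ?case using B0_pos[rule_format, of i] by simp
next
  case (Suc n)
  have IH: "(\<Sum>i\<in>I. real (cnt h n i)) \<ge> real n + 1" using Suc good_mono by auto
  have "I \<in> {J\<in>E. h (Suc n) J \<in> I}" using Suc.prems unfolding good_def by auto
  moreover have "finite {J\<in>E. h (Suc n) J \<in> I}" by simp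
  ultimately have "card {J\<in>E. h (Suc n) J \<in> I} > 0" using card_gt_0_iff by blast
  then have "card {J\<in>E. h (Suc n) J \<in> I} \<ge> 1" by simp
  moreover have "(\<Sum>i\<in>I. real (card {J\<in>E. h (Suc n) J = i})) = real (card {J\<in>E. h (Suc n) J \<in> I})"
    by (simp only: of_nat_sum[symmetric] card_split_sum)
  ultimately have "(\<Sum>i\<in>I. real (card {J\<in>E. h (Suc n) J = i})) \<ge> 1" by simp
  then show ?case using IH by (simp add: sum.distrib)
qed

lemma cnt_step_edge:
  "(\<Sum>i\<in>(I::'v set). real (card {J\<in>E. h (Suc n) J = i})) \<le> NN"
proof -
  have "card {J\<in>E. h (Suc n) J \<in> I} \<le> card E" by (rule card_mono) auto
  moreover have "(\<Sum>i\<in>I. real (card {J\<in>E. h (Suc n) J = i})) = real (card {J\<in>E. h (Suc n) J \<in> I})"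
    by (simp only: of_nat_sum[symmetric] card_split_sum)
  ultimately show ?thesis unfolding NN_def by simp
qed

end

lemma ln_lower:
  fixes a b :: real assumes "a > 0" "b > 0"
  shows "ln b - ln a \<ge> (b - a)/a - (b - a)^2/(a*b)"
proof -
  have "ln (a/b) \<le> a/b - 1" using assms by (intro ln_le_minus_one) auto
  then have "ln b - ln a \<ge> 1 - a/b" using assms by (simp add: ln_div)
  moreover have "(b - a)/a - (b - a)^2/(a*b) = 1 - a/b" using assms
    by (simp add: field_simps power2_eq_square)
  ultimately show ?thesis by simp
qed

lemma sum_swap_incl:
  fixes E :: "('v::finite) set set"
  shows "(\<Sum>i\<in>UNIV. \<Sum>I\<in>{I\<in>E. i\<in>I}. f i I) = (\<Sum>I\<in>E. \<Sum>i\<in>I. f i I)"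
proof -
  have "(\<Sum>i\<in>UNIV. \<Sum>I\<in>{I\<in>E. i\<in>I}. f i I) = (\<Sum>i\<in>UNIV. \<Sum>I\<in>E. if i \<in> I then f i I else 0)"
    by (simp add: sum.inter_filter)
  also have "\<dots> = (\<Sum>I\<in>E. \<Sum>i\<in>UNIV. if i \<in> I then f i I else 0)" by (rule sum.swap)
  also have "\<dots> = (\<Sum>I\<in>E. \<Sum>i\<in>I. f i I)"
    by (intro sum.cong[OF refl]) (simp add: sum.If_cases)
  finally show ?thesis .
qed

lemma sum_card_weight:
  fixes E :: "('v::finite) set set" and f :: "'v set \<Rightarrow> 'v" and g :: "'v \<Rightarrow> real"
  shows "(\<Sum>i\<in>UNIV. real (card {J\<in>E. f J = i}) * g i) = (\<Sum>J\<in>E. g (f J))"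
proof -
  have c: "real (card {J\<in>E. f J = i}) = (\<Sum>J\<in>E. if i = f J then 1 else 0)" for i
  proof -
    have "real (card {J\<in>E. f J = i}) = (\<Sum>J\<in>{J\<in>E. f J = i}. 1)" by simp
    also have "\<dots> = (\<Sum>J\<in>E. if f J = i then 1 else 0)" by (rule sum.inter_filter) simp
    also have "\<dots> = (\<Sum>J\<in>E. if i = f J then 1 else 0)" by (intro sum.cong refl) auto
    finally show ?thesis .
  qed
  have "(\<Sum>i\<in>UNIV. real (card {J\<in>E. f J = i}) * g i) = (\<Sum>i\<in>UNIV. \<Sum>J\<in>E. if i = f J then g i else 0)"
    unfolding c sum_distrib_right by (intro sum.cong refl) auto
  also have "\<dots> = (\<Sum>J\<in>E. \<Sum>i\<in>UNIV. if i = f J then g i else 0)" by (rule sum.swap)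
  also have "\<dots> = (\<Sum>J\<in>E. g (f J))" by (simp add: sum.delta)
  finally show ?thesis .
qed

context urn begin

abbreviation xx where "xx \<equiv> urn_x B0 E"

lemma xx_nth: "xx h n $ i = real (cnt h n i) / tt n"
  unfolding urn_x_def tt_def N0_def NN_def by simp

lemma vsum_xx: "vsum (xx h n) I = (\<Sum>i\<in>I. real (cnt h n i)) / tt n"
  unfolding vsum_def xx_nth by (simp add: sum_divide_distrib)

lemma xx_nonneg: "xx h n $ i \<ge> 0"
  unfolding xx_nth using tt_pos[of n] by simp

lemma xx_sum: "(\<Sum>i\<in>UNIV. xx h n $ i) = 1"
  unfolding xx_nth using cnt_total[of h n] tt_pos[of n] by (simp add: sum_divide_distrib[symmetric])

lemma vsum_le1: "vsum (xx h n) I \<le> 1"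
proof -
  have "vsum (xx h n) I \<le> (\<Sum>i\<in>UNIV. xx h n $ i)" unfolding vsum_def
    by (rule sum_mono2) (auto simp: xx_nonneg)
  then show ?thesis using xx_sum by simp
qed

lemma vsum_ge_del:
  assumes "good h n" "I \<in> E"
  shows "vsum (xx h n) I \<ge> del"
proof -
  have a: "(\<Sum>i\<in>I. real (cnt h n i)) \<ge> real n + 1" using cnt_edge_ge[OF assms] .
  have "tt n \<le> (real n + 1) * (N0 + NN)" unfolding tt_def using N0_ge1 NN_ge1
    by (simp add: algebra_simps)
  then have "del \<le> (real n + 1) / tt n" unfolding del_def using tt_pos[of n] N0_ge1 NN_ge1
    by (simp add: field_simps)
  also have "\<dots> \<le> vsum (xx h n) I" unfolding vsum_xx using a tt_pos[of n]
    by (simp add: divide_right_mono)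
  finally show ?thesis .
qed

lemma xx_step:
  "xx h (Suc n) $ i - xx h n $ i = (real (card {J\<in>E. h (Suc n) J = i}) - NN * xx h n $ i) / tt (Suc n)"
  unfolding xx_nth using tt_pos[of n] tt_pos[of "Suc n"] tt_Suc[of n]
  by (simp add: field_simps)

definition sf :: "real ^ 'v \<Rightarrow> 'v \<Rightarrow> real" where
  "sf v i = (\<Sum>I\<in>{I\<in>E. i\<in>I}. 1 / vsum v I)"

definition gg :: "real ^ 'v \<Rightarrow> real" where
  "gg v = (\<Sum>i\<in>UNIV. v $ i * (sf v i)^2) - NN^2"

definition LL :: "real ^ 'v \<Rightarrow> real" where
  "LL v = (\<Sum>I\<in>E. ln (vsum v I))"

definition xi :: "(nat \<Rightarrow> 'v set \<Rightarrow> 'v) \<Rightarrow> nat \<Rightarrow> real" where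
  "xi h n = (\<Sum>J\<in>E. sf (xx h n) (h (Suc n) J)) - (\<Sum>i\<in>UNIV. xx h n $ i * (sf (xx h n) i)^2)"

lemma sum_x_sf:
  assumes "\<forall>I\<in>E. vsum v I \<noteq> 0"
  shows "(\<Sum>i\<in>UNIV. v $ i * sf v i) = NN"
proof -
  have "(\<Sum>i\<in>UNIV. v $ i * sf v i) = (\<Sum>i\<in>UNIV. \<Sum>I\<in>{I\<in>E. i\<in>I}. v $ i / vsum v I)"
    unfolding sf_def by (simp add: sum_distrib_left)
  also have "\<dots> = (\<Sum>I\<in>E. \<Sum>i\<in>I. v $ i / vsum v I)" by (rule sum_swap_incl)
  also have "\<dots> = (\<Sum>I\<in>E. 1)"
    using assms by (intro sum.cong refl) (simp add: sum_divide_distrib[symmetric] vsum_def)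
  finally show ?thesis unfolding NN_def by simp
qed

lemma gg_eq:
  assumes "\<forall>I\<in>E. vsum v I \<noteq> 0" "(\<Sum>i\<in>UNIV. v $ i) = 1"
  shows "gg v = (\<Sum>i\<in>UNIV. v $ i * (sf v i - NN)^2)"
proof -
  have "(\<Sum>i\<in>UNIV. v $ i * (sf v i - NN)^2)
      = (\<Sum>i\<in>UNIV. v $ i * (sf v i)^2) - 2 * NN * (\<Sum>i\<in>UNIV. v $ i * sf v i) + NN^2 * (\<Sum>i\<in>UNIV. v $ i)"
  proof -
    have pt: "v$i * (sf v i - NN)^2 = v$i * (sf v i)^2 - 2*NN*(v$i * sf v i) + NN^2 * v$i" for i
      by (simp add: power2_eq_square algebra_simps)
    have "(\<Sum>i\<in>UNIV. v $ i * (sf v i - NN)^2) = (\<Sum>i\<in>UNIV. v$i * (sf v i)^2 - 2*NN*(v$i * sf v i) + NN^2 * v$i)"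
      unfolding pt ..
    also have "\<dots> = (\<Sum>i\<in>UNIV. v $ i * (sf v i)^2) - 2 * NN * (\<Sum>i\<in>UNIV. v $ i * sf v i) + NN^2 * (\<Sum>i\<in>UNIV. v $ i)"
      by (simp only: sum.distrib sum_subtractf sum_distrib_left)
    finally show ?thesis .
  qed
  then show ?thesis unfolding gg_def using sum_x_sf[OF assms(1)] assms(2)
    by (simp add: power2_eq_square)
qed

lemma gg_nonneg:
  assumes "\<forall>I\<in>E. vsum v I \<noteq> 0" "(\<Sum>i\<in>UNIV. v $ i) = 1" "\<forall>i. v $ i \<ge> 0"
  shows "gg v \<ge> 0"
  unfolding gg_eq[OF assms(1,2)] using assms(3) by (intro sum_nonneg) auto

end

context urn begin

lemma vsum_pos: "good h n \<Longrightarrow> I \<in> E \<Longrightarrow> vsum (xx h n) I > 0"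
  using vsum_ge_del del_pos by fastforce

lemma sf_nonneg: "good h n \<Longrightarrow> sf (xx h n) i \<ge> 0"
  unfolding sf_def using vsum_pos by (intro sum_nonneg) (auto simp: less_imp_le)

lemma sf_le: assumes "good h n" shows "sf (xx h n) i \<le> NN / del"
proof -
  have "sf (xx h n) i \<le> (\<Sum>I\<in>{I\<in>E. i\<in>I}. 1 / del)" unfolding sf_def
    using vsum_ge_del[OF assms] del_pos by (intro sum_mono frac_le) auto
  also have "\<dots> = real (card {I\<in>E. i\<in>I}) / del" by simp
  also have "\<dots> \<le> NN / del" unfolding NN_def using del_pos
    by (intro divide_right_mono) (auto intro!: card_mono)
  finally show ?thesis .
qed

definition KK :: real where "KK = NN^2 / del^2"

lemma xi_bound: assumes "good h n" shows "\<bar>xi h n\<bar> \<le> KK"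
proof -
  let ?v = "xx h n"
  have a0: "(\<Sum>J\<in>E. sf ?v (h (Suc n) J)) \<ge> 0" using sf_nonneg[OF assms] by (intro sum_nonneg) auto
  have "(\<Sum>J\<in>E. sf ?v (h (Suc n) J)) \<le> (\<Sum>J\<in>E. NN / del)" using sf_le[OF assms] by (intro sum_mono) auto
  also have "\<dots> = NN^2 / del" unfolding NN_def by (simp add: power2_eq_square)
  also have "\<dots> \<le> NN^2 / del^2" using del_pos del_le1 NN_ge1
    by (intro divide_left_mono) (auto simp: power2_eq_square mult_le_cancel_left1)
  finally have a1: "(\<Sum>J\<in>E. sf ?v (h (Suc n) J)) \<le> KK" unfolding KK_def .
  have b0: "(\<Sum>i\<in>UNIV. ?v $ i * (sf ?v i)^2) \<ge> 0" using xx_nonneg by (intro sum_nonneg) auto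
  have "(\<Sum>i\<in>UNIV. ?v $ i * (sf ?v i)^2) \<le> (\<Sum>i\<in>UNIV. ?v $ i * (NN/del)^2)"
    using xx_nonneg sf_nonneg[OF assms] sf_le[OF assms]
    by (intro sum_mono mult_left_mono power_mono) auto
  also have "\<dots> = (NN/del)^2" using xx_sum[of h n] by (simp add: sum_distrib_right[symmetric])
  finally have b1: "(\<Sum>i\<in>UNIV. ?v $ i * (sf ?v i)^2) \<le> KK" unfolding KK_def by (simp add: power_divide)
  show ?thesis unfolding xi_def using a0 a1 b0 b1 by linarith
qed

lemma lyap_step:
  assumes g: "good h (Suc n)"
  shows "LL (xx h (Suc n)) - LL (xx h n)
           \<ge> (gg (xx h n) + xi h n) / tt (Suc n) - NN^3 / (del^2 * (tt (Suc n))^2)"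
proof -
  let ?v = "xx h n" and ?w = "xx h (Suc n)" and ?t = "tt (Suc n)"
  define d where "d i = real (card {J\<in>E. h (Suc n) J = i})" for i
  have gn: "good h n" using g good_mono by auto
  have tpos: "?t > 0" using tt_pos .
  have vpos: "vsum ?v I \<ge> del" "vsum ?w I \<ge> del" if "I \<in> E" for I
    using vsum_ge_del[OF gn that] vsum_ge_del[OF g that] by auto
  have step: "?w $ i - ?v $ i = (d i - NN * ?v $ i) / ?t" for i
    unfolding d_def by (rule xx_step)
  have wv: "vsum ?w I - vsum ?v I = (\<Sum>i\<in>I. ?w $ i - ?v $ i)" for I
    unfolding vsum_def by (simp add: sum_subtractf)
  have "LL ?w - LL ?v = (\<Sum>I\<in>E. ln (vsum ?w I) - ln (vsum ?v I))"
    unfolding LL_def by (simp add: sum_subtractf)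
  also have "\<dots> \<ge> (\<Sum>I\<in>E. (vsum ?w I - vsum ?v I)/vsum ?v I - (vsum ?w I - vsum ?v I)^2/(vsum ?v I * vsum ?w I))"
    using vpos del_pos by (intro sum_mono ln_lower) fastforce+
  finally have L1: "LL ?w - LL ?v \<ge> (\<Sum>I\<in>E. (vsum ?w I - vsum ?v I)/vsum ?v I)
       - (\<Sum>I\<in>E. (vsum ?w I - vsum ?v I)^2/(vsum ?v I * vsum ?w I))"
    by (simp add: sum_subtractf)
  have "(\<Sum>I\<in>E. (vsum ?w I - vsum ?v I)/vsum ?v I) = (\<Sum>I\<in>E. \<Sum>i\<in>I. (?w $ i - ?v $ i)/vsum ?v I)"
    unfolding wv by (simp add: sum_divide_distrib)
  also have "\<dots> = (\<Sum>i\<in>UNIV. \<Sum>I\<in>{I\<in>E. i\<in>I}. (?w $ i - ?v $ i)/vsum ?v I)"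
    by (rule sum_swap_incl[symmetric])
  also have "\<dots> = (\<Sum>i\<in>UNIV. (?w $ i - ?v $ i) * sf ?v i)"
    unfolding sf_def by (simp add: sum_distrib_left)
  also have "\<dots> = (\<Sum>i\<in>UNIV. d i * sf ?v i - NN * (?v $ i * sf ?v i)) / ?t"
    unfolding step sum_divide_distrib by (intro sum.cong refl) (simp add: algebra_simps)
  also have "\<dots> = ((\<Sum>i\<in>UNIV. d i * sf ?v i) - NN * (\<Sum>i\<in>UNIV. ?v $ i * sf ?v i)) / ?t"
    by (simp add: sum_subtractf sum_distrib_left)
  also have "\<dots> = ((\<Sum>J\<in>E. sf ?v (h (Suc n) J)) - NN * NN) / ?t"
    unfolding d_def sum_card_weight using sum_x_sf[of ?v] vsum_pos[OF gn] by force
  also have "\<dots> = (gg ?v + xi h n) / ?t"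
    unfolding gg_def xi_def by (simp add: power2_eq_square)
  finally have A: "(\<Sum>I\<in>E. (vsum ?w I - vsum ?v I)/vsum ?v I) = (gg ?v + xi h n) / ?t" .
  have B1: "(vsum ?w I - vsum ?v I)^2/(vsum ?v I * vsum ?w I) \<le> NN^2 / (del^2 * ?t^2)" if I: "I \<in> E" for I
  proof -
    define D where "D = (\<Sum>i\<in>I. d i)"
    have D0: "0 \<le> D" unfolding D_def d_def by (intro sum_nonneg) auto
    have D1: "D \<le> NN" unfolding D_def d_def by (rule cnt_step_edge)
    have v0: "0 \<le> vsum ?v I" and v1: "vsum ?v I \<le> 1" using vpos[OF I] del_pos vsum_le1 by auto
    have "vsum ?w I - vsum ?v I = (\<Sum>i\<in>I. (d i - NN * ?v $ i) / ?t)"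
      unfolding wv step ..
    also have "\<dots> = (D - NN * vsum ?v I) / ?t"
      unfolding D_def vsum_def by (simp add: sum_divide_distrib[symmetric] sum_subtractf sum_distrib_left)
    finally have "vsum ?w I - vsum ?v I = (D - NN * vsum ?v I) / ?t" .
    moreover have "\<bar>D - NN * vsum ?v I\<bar> \<le> NN"
    proof -
      have "NN * vsum ?v I \<le> NN" "NN * vsum ?v I \<ge> 0" using v0 v1 NN_ge1 by (simp_all add: mult_left_le)
      then show ?thesis using D0 D1 by (simp add: abs_le_iff)
    qed
    ultimately have "\<bar>vsum ?w I - vsum ?v I\<bar> \<le> NN / ?t" using tpos by (simp add: divide_right_mono)
    then have num: "(vsum ?w I - vsum ?v I)^2 \<le> (NN / ?t)^2"
      by (metis abs_ge_zero power2_abs power_mono)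
    have den: "del^2 \<le> vsum ?v I * vsum ?w I"
      using vpos[OF I] del_pos by (simp add: power2_eq_square mult_mono)
    have "(vsum ?w I - vsum ?v I)^2/(vsum ?v I * vsum ?w I) \<le> (NN / ?t)^2 / del^2"
      using num den del_pos by (intro frac_le) auto
    then show ?thesis by (simp add: power_divide field_simps)
  qed
  have B: "(\<Sum>I\<in>E. (vsum ?w I - vsum ?v I)^2/(vsum ?v I * vsum ?w I)) \<le> NN^3 / (del^2 * ?t^2)"
  proof -
    have "(\<Sum>I\<in>E. (vsum ?w I - vsum ?v I)^2/(vsum ?v I * vsum ?w I)) \<le> (\<Sum>I\<in>E. NN^2 / (del^2 * ?t^2))"
      using B1 by (rule sum_mono)
    also have "\<dots> = NN^3 / (del^2 * ?t^2)" unfolding NN_def by (simp add: power3_eq_cube power2_eq_square)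
    finally show ?thesis .
  qed
  show ?thesis using L1 A B by linarith
qed

end

lemma inv_sq_sum: "(\<Sum>k<n. 1 / (real k + 1)^2) \<le> 2 - 2 / (real n + 1)"
proof (induction n)
  case 0 then show ?case by simp
next
  case (Suc n)
  define x where "x = real n"
  have x0: "x \<ge> 0" unfolding x_def by simp
  have e: "2 / (x + 1) - 2 / (x + 2) = 2 / ((x+1)*(x+2))"
  proof -
    have "2 / (x + 1) - 2 / (x + 2) = (2*(x+2) - 2*(x+1)) / ((x+1)*(x+2))"
      using x0 by (intro diff_frac_eq) auto
    then show ?thesis by (simp add: algebra_simps)
  qed
  have "(x+1)*(x+2) \<le> (x+1)*(2*(x+1))" using x0 by (intro mult_left_mono) auto
  then have q: "(x+1)*(x+2) \<le> 2*(x+1)^2" by (simp add: power2_eq_square algebra_simps)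
  have p: "(x+1)*(x+2) > 0" using x0 by (intro mult_pos_pos) auto
  have "2 / (2*(x+1)^2) \<le> 2 / ((x+1)*(x+2))" by (rule frac_le) (use p q in auto)
  then have "1 / (real n + 1)^2 \<le> 2 / (real n + 1) - 2 / (real n + 2)"
    unfolding e[unfolded x_def] x_def by simp
  then show ?case using Suc by (simp add: add.commute)
qed

context urn begin

definition Sg where "Sg h n = (\<Sum>k<n. gg (xx h k) / tt (Suc k))"
definition Mg where "Mg h n = (\<Sum>k<n. xi h k / tt (Suc k))"
definition CC where "CC = - NN * ln del + 2 * (NN^3 / del^2)"

lemma gg_xx_nonneg: "good h n \<Longrightarrow> gg (xx h n) \<ge> 0"
  using vsum_pos xx_sum xx_nonneg by (intro gg_nonneg) (auto simp: less_le)

lemma Sg_mono: "good h n \<Longrightarrow> Sg h n \<le> Sg h (Suc n)"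
  unfolding Sg_def using gg_xx_nonneg[of h n] tt_pos[of "Suc n"] by simp

lemma LL_le0: "good h n \<Longrightarrow> LL (xx h n) \<le> 0"
  unfolding LL_def using vsum_pos vsum_le1 by (intro sum_nonpos) auto

lemma LL0_ge: "LL (xx h 0) \<ge> NN * ln del"
proof -
  have g0: "good h 0" unfolding good_def by simp
  have "(\<Sum>I\<in>E. ln del) \<le> LL (xx h 0)" unfolding LL_def
    using vsum_ge_del[OF g0] del_pos by (intro sum_mono) (subst ln_le_cancel_iff; force)
  then show ?thesis unfolding NN_def by simp
qed

lemma inv_tt_sq: "(\<Sum>k<n. 1 / (tt (Suc k))^2) \<le> 2"
proof -
  have "(\<Sum>k<n. 1 / (tt (Suc k))^2) \<le> (\<Sum>k<n. 1 / (real k + 1)^2)"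
  proof (intro sum_mono)
    fix k assume "k \<in> {..<n}"
    have "real k + 1 \<le> tt (Suc k)" using tt_ge[of k] by simp
    then show "1 / (tt (Suc k))^2 \<le> 1 / (real k + 1)^2"
      by (intro divide_left_mono power_mono mult_pos_pos) auto
  qed
  also have "\<dots> \<le> 2" using inv_sq_sum[of n] by (smt (verit) divide_nonneg_nonneg of_nat_0_le_iff)
  finally show ?thesis .
qed

lemma Sg_bound:
  assumes "good h n"
  shows "Sg h n \<le> CC - Mg h n"
proof -
  have "(\<Sum>k<n. (gg (xx h k) + xi h k) / tt (Suc k) - NN^3 / (del^2 * (tt (Suc k))^2))
        \<le> (\<Sum>k<n. LL (xx h (Suc k)) - LL (xx h k))"
    using assms by (intro sum_mono lyap_step) (auto intro: good_mono)
  also have "\<dots> = LL (xx h n) - LL (xx h 0)" by (rule sum_lessThan_telescope)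
  also have "\<dots> \<le> - NN * ln del" using LL_le0[OF assms] LL0_ge[of h] by linarith
  finally have 1: "(\<Sum>k<n. (gg (xx h k) + xi h k) / tt (Suc k)) - (NN^3/del^2) * (\<Sum>k<n. 1 / (tt (Suc k))^2)
        \<le> - NN * ln del"
    by (simp add: sum_subtractf sum_distrib_left)
  have "(NN^3/del^2) * (\<Sum>k<n. 1 / (tt (Suc k))^2) \<le> (NN^3/del^2) * 2"
    using inv_tt_sq[of n] NN_ge1 by (intro mult_left_mono) auto
  moreover have "(\<Sum>k<n. (gg (xx h k) + xi h k) / tt (Suc k)) = Sg h n + Mg h n"
    unfolding Sg_def Mg_def by (simp add: sum.distrib add_divide_distrib)
  ultimately show ?thesis using 1 unfolding CC_def
    by (smt (verit))
qed

end

context urn begin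

definition DD :: real where "DD = real CARD('v) * NN"

lemma xx_le1: "xx h n $ i \<le> 1"
proof -
  have "xx h n $ i \<le> (\<Sum>j\<in>UNIV. xx h n $ j)" by (rule member_le_sum) (auto simp: xx_nonneg)
  then show ?thesis using xx_sum by simp
qed

lemma xx_norm: "norm (xx h n) \<le> real CARD('v)"
proof -
  have "norm (xx h n) \<le> (\<Sum>i\<in>UNIV. \<bar>xx h n $ i\<bar>)" by (rule norm_le_l1_cart)
  also have "\<dots> \<le> (\<Sum>i\<in>(UNIV::'v set). 1)" using xx_le1 xx_nonneg by (intro sum_mono) auto
  finally show ?thesis by simp
qed

lemma xx_bounded: "bounded (range (xx h))"
  unfolding bounded_iff using xx_norm by blast

lemma xx_dist_step: "dist (xx h (Suc n)) (xx h n) \<le> DD / tt (Suc n)"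
proof -
  have c: "\<bar>xx h (Suc n) $ i - xx h n $ i\<bar> \<le> NN / tt (Suc n)" for i
  proof -
    define d where "d = real (card {J\<in>E. h (Suc n) J = i})"
    have d0: "0 \<le> d" and d1: "d \<le> NN" unfolding d_def NN_def by (auto intro!: card_mono)
    have "NN * xx h n $ i \<le> NN" "NN * xx h n $ i \<ge> 0" using xx_le1 xx_nonneg NN_ge1
      by (simp_all add: mult_left_le)
    then have "\<bar>d - NN * xx h n $ i\<bar> \<le> NN" using d0 d1 by (simp add: abs_le_iff)
    then show ?thesis unfolding xx_step[of h n i] d_def[symmetric] using tt_pos[of "Suc n"]
      by (simp add: divide_right_mono)
  qed
  have "dist (xx h (Suc n)) (xx h n) = norm (xx h (Suc n) - xx h n)" by (simp add: dist_norm)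
  also have "\<dots> \<le> (\<Sum>i\<in>UNIV. \<bar>(xx h (Suc n) - xx h n) $ i\<bar>)" by (rule norm_le_l1_cart)
  also have "\<dots> \<le> (\<Sum>i\<in>(UNIV::'v set). NN / tt (Suc n))" using c by (intro sum_mono) simp
  also have "\<dots> = DD / tt (Suc n)" unfolding DD_def by simp
  finally show ?thesis .
qed

lemma xx_dist_to0: "(\<lambda>n. dist (xx h (Suc n)) (xx h n)) \<longlonglongrightarrow> 0"
proof (rule tendsto_sandwich[of "\<lambda>_. 0" _ _ "\<lambda>n. DD * inverse (real (Suc n))"])
  show "\<forall>\<^sub>F n in sequentially. 0 \<le> dist (xx h (Suc n)) (xx h n)" by simp
  show "\<forall>\<^sub>F n in sequentially. dist (xx h (Suc n)) (xx h n) \<le> DD * inverse (real (Suc n))"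
  proof (intro always_eventually allI)
    fix n
    have "DD \<ge> 0" unfolding DD_def using NN_ge1 by simp
    then have "DD / tt (Suc n) \<le> DD / real (Suc n)" using tt_ge[of n]
      by (intro divide_left_mono) auto
    then show "dist (xx h (Suc n)) (xx h n) \<le> DD * inverse (real (Suc n))"
      using xx_dist_step[of h n] by (simp add: divide_inverse)
  qed
  show "(\<lambda>_. 0) \<longlonglongrightarrow> (0::real)" by simp
  show "(\<lambda>n. DD * inverse (real (Suc n))) \<longlonglongrightarrow> 0"
    using tendsto_mult_right_zero[OF LIMSEQ_inverse_real_of_nat] by simp
qed

lemma edge_frac_ge_c:
  assumes c: "0 < c" "c < 1 / NN"
  shows "\<exists>n0. \<forall>n\<ge>n0. (real n + 1) / tt n \<ge> c"
proof -
  have cN: "1 - c * NN > 0" using c NN_ge1 by (simp add: field_simps)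
  obtain n0 :: nat where n0: "real n0 \<ge> c * N0 / (1 - c * NN)" using real_arch_simple by blast
  have "(real n + 1) / tt n \<ge> c" if n: "n \<ge> n0" for n
  proof -
    have "real n \<ge> c * N0 / (1 - c * NN)" using n n0 by linarith
    then have "real n * (1 - c * NN) \<ge> c * N0" using cN by (simp add: field_simps)
    then have "c * tt n \<le> real n + 1" unfolding tt_def by (simp add: algebra_simps)
    then show ?thesis using tt_pos[of n] by (simp add: field_simps)
  qed
  then show ?thesis by blast
qed

lemma limit_in_Delta:
  assumes c: "0 < c" "c < 1 / NN" and g: "\<forall>n. good h n" and p: "p \<in> limit_set (xx h)"
  shows "p \<in> Delta E c"
proof -
  from p obtain r where r: "strict_mono r" "(xx h \<circ> r) \<longlonglongrightarrow> p" unfolding limit_set_def by auto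
  have comp: "(\<lambda>k. xx h (r k) $ i) \<longlonglongrightarrow> p $ i" for i
    using tendsto_vec_nth[OF r(2)] by (simp add: comp_def)
  have nn: "p $ i \<ge> 0" for i
    by (rule LIMSEQ_le_const[OF comp]) (auto simp: xx_nonneg)
  have "(\<lambda>k. \<Sum>i\<in>UNIV. xx h (r k) $ i) \<longlonglongrightarrow> (\<Sum>i\<in>UNIV. p $ i)"
    by (intro tendsto_sum comp)
  then have s1: "(\<Sum>i\<in>UNIV. p $ i) = 1" using xx_sum by (simp add: LIMSEQ_const_iff)
  have vI: "vsum p I \<ge> c" if I: "I \<in> E" for I
  proof -
    have lim: "(\<lambda>k. vsum (xx h (r k)) I) \<longlonglongrightarrow> vsum p I"
      unfolding vsum_def by (intro tendsto_sum comp)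
    obtain n0 where n0: "\<And>n. n \<ge> n0 \<Longrightarrow> (real n + 1) / tt n \<ge> c" using edge_frac_ge_c[OF c] by blast
    have "c \<le> vsum (xx h (r k)) I" if "k \<ge> n0" for k
    proof -
      have "r k \<ge> n0" using seq_suble[OF r(1), of k] that by linarith
      then have "c \<le> (real (r k) + 1) / tt (r k)" using n0 by blast
      also have "\<dots> \<le> vsum (xx h (r k)) I" unfolding vsum_xx
        using cnt_edge_ge[OF g[rule_format] I, of "r k"] tt_pos[of "r k"] by (intro divide_right_mono) auto
      finally show ?thesis .
    qed
    then show ?thesis by (intro LIMSEQ_le_const[OF lim]) blast
  qed
  show ?thesis unfolding Delta_def using nn s1 vI by auto
qed

end

context urn begin

lemma gg_isCont:
  assumes "\<forall>I\<in>E. vsum p I \<noteq> 0"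
  shows "isCont gg p"
proof -
  have v: "isCont (\<lambda>v. vsum v I) p" for I unfolding vsum_def by (intro continuous_intros)
  have s: "isCont (\<lambda>v. sf v i) p" for i
    unfolding sf_def using assms by (intro continuous_intros v) auto
  show ?thesis unfolding gg_def[abs_def] by (intro continuous_intros s)
qed

definition UU :: "nat \<Rightarrow> real" where "UU j = (\<Sum>k<j. 1 / tt (Suc k))"

lemma UU_mono: "n \<le> j \<Longrightarrow> UU n \<le> UU j"
  unfolding UU_def using tt_pos by (intro sum_mono2) (auto simp: less_imp_le)

lemma dist_UU:
  assumes "n \<le> j"
  shows "dist (xx h j) (xx h n) \<le> DD * (UU j - UU n)"
  using assms
proof (induction j rule: dec_induct)
  case base then show ?case by simp
next
  case (step j)
  have "dist (xx h (Suc j)) (xx h n) \<le> dist (xx h (Suc j)) (xx h j) + dist (xx h j) (xx h n)"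
    by (rule dist_triangle)
  also have "\<dots> \<le> DD / tt (Suc j) + DD * (UU j - UU n)" using xx_dist_step step.IH by (intro add_mono) auto
  also have "\<dots> = DD * (UU (Suc j) - UU n)" unfolding UU_def by (simp add: algebra_simps divide_inverse)
  finally show ?case .
qed

lemma UU_unbounded: "\<exists>j. UU j > b"
proof -
  define a where "a = N0 + NN"
  have a: "a > 0" unfolding a_def using N0_ge1 NN_ge1 by simp
  obtain j :: nat where j: "real j \<ge> exp (b * a)" using real_arch_simple by blast
  have "ln (real j + 1) > b * a"
  proof -
    have "exp (b * a) < real j + 1" using j by linarith
    then have "ln (exp (b * a)) < ln (real j + 1)" by (subst ln_less_cancel_iff) auto
    then show ?thesis by simp
  qed
  then have "harm j > b * a" using ln_le_harm[of j] by linarith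
  also have "harm j = (\<Sum>k<j. inverse (real (Suc k)))" unfolding harm_def by (simp add: sum.atLeast1_atMost_eq)
  also have "\<dots> \<le> (\<Sum>k<j. a / tt (Suc k))"
  proof (intro sum_mono)
    fix k assume "k \<in> {..<j}"
    have "tt (Suc k) \<le> real (Suc k) * a" unfolding tt_def a_def using N0_ge1 NN_ge1
      by (simp add: algebra_simps)
    then show "inverse (real (Suc k)) \<le> a / tt (Suc k)" using tt_pos[of "Suc k"] a
      by (simp add: field_simps)
  qed
  also have "\<dots> = a * UU j" unfolding UU_def by (simp add: sum_distrib_left)
  finally show ?thesis using a by (intro exI[of _ j]) (simp add: mult.commute)
qed

lemma gg_limit_zero:
  assumes c: "0 < c" "c < 1 / NN" and g: "\<forall>n. good h n" and B: "\<forall>n. Sg h n \<le> B"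
    and p: "p \<in> limit_set (xx h)"
  shows "gg p = 0"
proof (rule ccontr)
  assume nz: "gg p \<noteq> 0"
  have pD: "p \<in> Delta E c" using limit_in_Delta[OF c g p] .
  have vp: "\<forall>I\<in>E. vsum p I \<noteq> 0" using pD c unfolding Delta_def by force
  have "gg p \<ge> 0" using pD vp unfolding Delta_def by (intro gg_nonneg) auto
  then have gp: "gg p > 0" using nz by simp
  define \<epsilon> where "\<epsilon> = gg p / 2"
  have ep: "\<epsilon> > 0" unfolding \<epsilon>_def using gp by simp
  obtain \<rho> where rho: "\<rho> > 0" "\<And>y. dist y p < \<rho> \<Longrightarrow> dist (gg y) (gg p) < \<epsilon>"
    using gg_isCont[OF vp] ep unfolding continuous_at_eps_delta by blast
  have ggy: "gg y > \<epsilon>" if "dist y p < \<rho>" for y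
    using rho(2)[OF that] unfolding \<epsilon>_def dist_real_def by linarith
  have DDp: "DD > 0" unfolding DD_def using NN_ge1 by simp
  define \<eta> where "\<eta> = \<epsilon> * \<rho> / (2 * DD)"
  have eta: "\<eta> > 0" unfolding \<eta>_def using ep rho DDp by simp
  have "incseq (Sg h)" using Sg_mono g by (intro incseq_SucI) auto
  then obtain L where "Sg h \<longlonglongrightarrow> L" using incseq_convergent[of "Sg h" B] B by blast
  then have "Cauchy (Sg h)" by (rule LIMSEQ_imp_Cauchy)
  then obtain M where M: "\<And>m n. m \<ge> M \<Longrightarrow> n \<ge> M \<Longrightarrow> dist (Sg h m) (Sg h n) < \<eta>"
    unfolding Cauchy_def using eta by blast
  have "\<rho>/2 > 0" using rho by simp
  then obtain n where n: "n \<ge> M" "dist (xx h n) p < \<rho>/2" using p unfolding limit_set_char by blast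
  have claim: "dist (xx h j) p < \<rho> \<and> \<epsilon> * (UU j - UU n) \<le> Sg h j - Sg h n" if "n \<le> j" for j
    using that
  proof (induction j rule: dec_induct)
    case base
    have "dist (xx h n) p < \<rho>" using n(2) zero_le_dist[of "xx h n" p] by linarith
    then show ?case by simp
  next
    case (step j)
    have gj: "gg (xx h j) > \<epsilon>" using ggy step.IH by blast
    have SgS: "Sg h (Suc j) = Sg h j + gg (xx h j) / tt (Suc j)" unfolding Sg_def by simp
    have UUS: "UU (Suc j) = UU j + 1 / tt (Suc j)" unfolding UU_def by simp
    have "\<epsilon> / tt (Suc j) \<le> gg (xx h j) / tt (Suc j)" using gj tt_pos[of "Suc j"]
      by (intro divide_right_mono) auto
    then have A: "\<epsilon> * (UU (Suc j) - UU n) \<le> Sg h (Suc j) - Sg h n"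
      using step.IH unfolding SgS UUS by (simp add: algebra_simps)
    have "Sg h (Suc j) - Sg h n < \<eta>" using M[of "Suc j" n] n step.hyps by (simp add: dist_real_def)
    then have "\<epsilon> * (UU (Suc j) - UU n) < \<eta>" using A by linarith
    then have "\<epsilon> * (UU (Suc j) - UU n) < \<epsilon> * (\<rho> / (2 * DD))" unfolding \<eta>_def by simp
    then have "UU (Suc j) - UU n < \<rho> / (2 * DD)" using mult_less_cancel_left_pos[OF ep] by blast
    then have "DD * (UU (Suc j) - UU n) < \<rho> / 2" using DDp by (simp add: field_simps)
    moreover have "dist (xx h (Suc j)) (xx h n) \<le> DD * (UU (Suc j) - UU n)"
      using step.hyps by (intro dist_UU) auto
    ultimately have "dist (xx h (Suc j)) p < \<rho>"
      using n(2) dist_triangle[of "xx h (Suc j)" p "xx h n"] by linarith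
    then show ?case using A by blast
  qed
  obtain j0 where j0: "UU j0 > UU n + (B - Sg h n) / \<epsilon>" using UU_unbounded by blast
  define j where "j = max j0 n"
  have "UU j \<ge> UU j0" unfolding j_def by (intro UU_mono) auto
  moreover have "\<epsilon> * (UU j - UU n) \<le> Sg h j - Sg h n" using claim[of j] unfolding j_def by auto
  then have "\<epsilon> * (UU j - UU n) \<le> B - Sg h n" using B[rule_format, of j] by linarith
  then have "UU j - UU n \<le> (B - Sg h n) / \<epsilon>" using ep by (simp add: field_simps)
  ultimately show False using j0 by linarith
qed

lemma gg_zero_F:
  assumes pD: "p \<in> Delta E c" and c: "0 < c" and gz: "gg p = 0"
  shows "urnF E p = 0"
proof -
  have vp: "\<forall>I\<in>E. vsum p I \<noteq> 0" using pD c unfolding Delta_def by force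
  have s1: "(\<Sum>i\<in>UNIV. p $ i) = 1" and nn: "\<forall>i. p $ i \<ge> 0" using pD unfolding Delta_def by auto
  have "(\<Sum>i\<in>UNIV. p $ i * (sf p i - NN)^2) = 0" using gg_eq[OF vp s1] gz by simp
  then have z: "p $ i * (sf p i - NN)^2 = 0" for i
    using nn by (subst (asm) sum_nonneg_eq_0_iff) auto
  show ?thesis
  proof (subst vec_eq_iff, intro allI)
    fix i
    have "urnF E p $ i = - p $ i + (1 / NN) * (p $ i * sf p i)"
      unfolding urnF_def sf_def NN_def by (simp add: sum_distrib_left)
    also have "\<dots> = 0"
    proof (cases "p $ i = 0")
      case True then show ?thesis by simp
    next
      case False then have "sf p i = NN" using z[of i] by simp
      then show ?thesis using NN_ge1 by simp
    qed
    finally show "urnF E p $ i = 0 $ i" by simp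
  qed
qed

lemma det_main:
  assumes c: "0 < c" "c < 1 / NN" and g: "\<forall>n. good h n" and B: "\<forall>n. Sg h n \<le> B"
  shows "limit_set (xx h) \<subseteq> Lambda E c \<and> connected (limit_set (xx h))"
proof
  show "limit_set (xx h) \<subseteq> Lambda E c"
  proof
    fix p assume p: "p \<in> limit_set (xx h)"
    have pD: "p \<in> Delta E c" using limit_in_Delta[OF c g p] .
    have "urnF E p = 0" using gg_zero_F[OF pD c(1) gg_limit_zero[OF c g B p]] .
    then show "p \<in> Lambda E c" using pD unfolding Lambda_def by simp
  qed
  show "connected (limit_set (xx h))"
    by (rule limit_set_connected[OF xx_bounded xx_dist_to0])
qed

end

lemma pie_marginal:
  fixes q :: "'a \<Rightarrow> 'v::finite \<Rightarrow> real"
  assumes A: "finite A" and J: "J \<in> A" and q1: "\<forall>I\<in>A. (\<Sum>i\<in>UNIV. q I i) = 1"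
  shows "(\<Sum>c\<in>PiE A (\<lambda>_. UNIV). (\<Prod>I\<in>A. q I (c I)) * f (c J)) = (\<Sum>i\<in>UNIV. q J i * f i)"
proof -
  define g where "g I i = q I i * (if I = J then f i else 1)" for I i
  have "(\<Prod>I\<in>A. \<Sum>i\<in>UNIV. g I i) = (\<Sum>c\<in>PiE A (\<lambda>_. UNIV). \<Prod>I\<in>A. g I (c I))"
    using A by (rule prod_sum_PiE) simp
  moreover have "(\<Prod>I\<in>A. g I (c I)) = (\<Prod>I\<in>A. q I (c I)) * f (c J)" for c
  proof -
    have "(\<Prod>I\<in>A. g I (c I)) = (\<Prod>I\<in>A. q I (c I)) * (\<Prod>I\<in>A. if I = J then f (c I) else 1)"
      unfolding g_def by (rule prod.distrib)
    also have "(\<Prod>I\<in>A. if I = J then f (c I) else 1) = f (c J)"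
      using A J by (simp add: prod.delta)
    finally show ?thesis .
  qed
  moreover have "(\<Prod>I\<in>A. \<Sum>i\<in>UNIV. g I i) = (\<Sum>i\<in>UNIV. q J i * f i)"
  proof -
    have "(\<Prod>I\<in>A. \<Sum>i\<in>UNIV. g I i) = (\<Prod>I\<in>A. if I = J then (\<Sum>i\<in>UNIV. q J i * f i) else 1)"
      unfolding g_def using q1 by (intro prod.cong refl) auto
    also have "\<dots> = (\<Sum>i\<in>UNIV. q J i * f i)" using A J by (simp add: prod.delta)
    finally show ?thesis .
  qed
  ultimately show ?thesis by simp
qed

lemma pie_total:
  fixes q :: "'a \<Rightarrow> 'v::finite \<Rightarrow> real"
  assumes A: "finite A" and q1: "\<forall>I\<in>A. (\<Sum>i\<in>UNIV. q I i) = 1"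
  shows "(\<Sum>c\<in>PiE A (\<lambda>_. UNIV). (\<Prod>I\<in>A. q I (c I))) = 1"
proof -
  have "(\<Prod>I\<in>A. \<Sum>i\<in>UNIV. q I i) = (\<Sum>c\<in>PiE A (\<lambda>_. UNIV). \<Prod>I\<in>A. q I (c I))"
    using A by (rule prod_sum_PiE) simp
  moreover have "(\<Prod>I\<in>A. \<Sum>i\<in>UNIV. q I i) = 1" using q1 by simp
  ultimately show ?thesis by simp
qed

context urn begin

definition HH :: "nat \<Rightarrow> (nat \<Rightarrow> 'v set \<Rightarrow> 'v) set" where
  "HH n = {h. \<forall>k I. \<not> (k \<in> {1..n} \<and> I \<in> E) \<longrightarrow> h k I = undefined}"

definition rs :: "nat \<Rightarrow> (nat \<Rightarrow> 'v set \<Rightarrow> 'v) \<Rightarrow> (nat \<Rightarrow> 'v set \<Rightarrow> 'v)" where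
  "rs n h = (\<lambda>k I. if k \<in> {1..n} \<and> I \<in> E then h k I else undefined)"

abbreviation CE where "CE \<equiv> PiE E (\<lambda>_. UNIV :: 'v set)"

lemma rs_in: "rs n h \<in> HH n" unfolding rs_def HH_def by auto
lemma rs_agree: "\<forall>k\<in>{1..n}. \<forall>I\<in>E. rs n h k I = h k I" unfolding rs_def by auto
lemma rs_eq_iff: "g \<in> HH n \<Longrightarrow> rs n h = g \<longleftrightarrow> (\<forall>k\<in>{1..n}. \<forall>I\<in>E. h k I = g k I)"
  unfolding rs_def HH_def by (auto simp: fun_eq_iff)

definition ext :: "nat \<Rightarrow> (nat \<Rightarrow> 'v set \<Rightarrow> 'v) \<times> ('v set \<Rightarrow> 'v) \<Rightarrow> (nat \<Rightarrow> 'v set \<Rightarrow> 'v)" where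
  "ext n = (\<lambda>(h, c). h(Suc n := c))"

lemma HH_Suc_undef: "h \<in> HH n \<Longrightarrow> h (Suc n) = (\<lambda>_. undefined)"
  unfolding HH_def by auto

lemma HH_Suc: "HH (Suc n) = ext n ` (HH n \<times> CE)"
proof
  show "HH (Suc n) \<subseteq> ext n ` (HH n \<times> CE)"
  proof
    fix g assume g: "g \<in> HH (Suc n)"
    define h where "h = g(Suc n := (\<lambda>_. undefined))"
    have "h \<in> HH n" using g unfolding HH_def h_def by auto
    moreover have "g (Suc n) \<in> CE" using g unfolding HH_def PiE_def extensional_def by auto
    moreover have "g = ext n (h, g (Suc n))" unfolding ext_def h_def by auto
    ultimately show "g \<in> ext n ` (HH n \<times> CE)" by blast
  qed
  show "ext n ` (HH n \<times> CE) \<subseteq> HH (Suc n)"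
    unfolding ext_def HH_def PiE_def extensional_def by auto
qed

lemma ext_inj: "inj_on (ext n) (HH n \<times> CE)"
proof (rule inj_onI)
  fix a b assume a: "a \<in> HH n \<times> CE" and b: "b \<in> HH n \<times> CE" and e: "ext n a = ext n b"
  obtain h c where hc: "a = (h, c)" by force
  obtain h' c' where hc': "b = (h', c')" by force
  have "h (Suc n) = h' (Suc n)" using a b hc hc' HH_Suc_undef by auto
  moreover have "c = c'" using e hc hc' unfolding ext_def by (metis fun_upd_same prod.simps(2))
  moreover have "h k = h' k" if "k \<noteq> Suc n" for k
    using e hc hc' that unfolding ext_def by (metis fun_upd_other prod.simps(2))
  ultimately show "a = b" using hc hc' by (metis ext)
qed

lemma HH_0: "HH 0 = {\<lambda>_ _. undefined}" unfolding HH_def by (auto simp: fun_eq_iff)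

lemma HH_finite: "finite (HH n)"
proof (induction n)
  case 0 then show ?case by (simp add: HH_0)
next
  case (Suc n) then show ?case unfolding HH_Suc by (intro finite_imageI finite_cartesian_product finite_PiE) auto
qed

lemma sum_HH_Suc:
  "(\<Sum>g\<in>HH (Suc n). f g) = (\<Sum>h\<in>HH n. \<Sum>c\<in>CE. f (h(Suc n := c)))"
proof -
  have "(\<Sum>g\<in>HH (Suc n). f g) = (\<Sum>x\<in>HH n \<times> CE. f (ext n x))"
    unfolding HH_Suc by (rule sum.reindex[OF ext_inj, unfolded comp_def])
  also have "\<dots> = (\<Sum>h\<in>HH n. \<Sum>c\<in>CE. f (ext n (h, c)))"
    by (subst sum.cartesian_product) (simp add: case_prod_unfold)
  finally show ?thesis unfolding ext_def by simp
qed

end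

context urn begin

abbreviation pp where "pp h n \<equiv> urn_path_prob B0 E h n"

definition qq :: "(nat \<Rightarrow> 'v set \<Rightarrow> 'v) \<Rightarrow> nat \<Rightarrow> 'v set \<Rightarrow> 'v \<Rightarrow> real" where
  "qq h n I i = (if i \<in> I then real (cnt h n i) / real (\<Sum>j\<in>I. cnt h n j) else 0)"

lemma pp_dep:
  assumes a: "\<forall>k\<in>{1..n}. \<forall>I\<in>E. h k I = h' k I"
  shows "urn_path_prob B0 E h n = urn_path_prob B0 E h' n"
proof -
  have c: "cnt h (k - 1) = cnt h' (k - 1)" if "k \<in> {1..n}" for k
  proof (rule cnt_dep, intro ballI)
    fix j I assume "j \<in> {1..k-1}" "I \<in> E"
    then show "h j I = h' j I" using a that by auto
  qed
  show ?thesis unfolding urn_path_prob_def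
  proof (intro prod.cong refl)
    fix k I assume k: "k \<in> {1..n}" and I: "I \<in> E"
    have "h k I = h' k I" using a k I by blast
    then show "(if h k I \<in> I then real (cnt h (k - 1) (h k I)) / real (\<Sum>j\<in>I. cnt h (k - 1) j) else 0) =
          (if h' k I \<in> I then real (cnt h' (k - 1) (h' k I)) / real (\<Sum>j\<in>I. cnt h' (k - 1) j) else 0)"
      using c[OF k] by simp
  qed
qed

lemma pp_Suc: "pp (h(Suc n := c)) (Suc n) = pp h n * (\<Prod>I\<in>E. qq h n I (c I))"
proof -
  let ?h' = "h(Suc n := c)"
  have cd: "cnt ?h' m = cnt h m" if "m \<le> n" for m using that by (intro cnt_dep) auto
  define F where "F k = (\<Prod>I\<in>E. (if ?h' k I \<in> I then real (cnt ?h' (k - 1) (?h' k I)) / real (\<Sum>j\<in>I. cnt ?h' (k - 1) j) else 0))" for k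
  have ppF: "pp ?h' m = prod F {1..m}" for m unfolding urn_path_prob_def F_def ..
  have ins: "{1..Suc n} = insert (Suc n) {1..n}" by auto
  have "pp ?h' (Suc n) = F (Suc n) * prod F {1..n}" unfolding ppF ins by (rule prod.insert) auto
  also have "prod F {1..n} = pp h n" using ppF[of n] pp_dep[of n ?h' h] by auto
  also have "F (Suc n) = (\<Prod>I\<in>E. qq h n I (c I))" unfolding F_def qq_def using cd[of n] by (simp cong: if_cong)
  finally show ?thesis by (simp only: mult.commute)
qed

lemma qq_nonneg: "qq h n I i \<ge> 0" unfolding qq_def by (simp del: of_nat_sum)

lemma pp_nonneg: "pp h n \<ge> 0"
  unfolding urn_path_prob_def by (intro prod_nonneg) (simp del: of_nat_sum)

lemma pp_good: assumes "pp h n \<noteq> 0" shows "good h n"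
  unfolding good_def
proof (intro ballI)
  fix k I assume k: "k \<in> {1..n}" and I: "I \<in> E"
  define G where "G k' I' = (if h k' I' \<in> I' then real (cnt h (k' - 1) (h k' I')) / real (\<Sum>j\<in>I'. cnt h (k' - 1) j) else 0)" for k' I'
  have ppG: "pp h n = (\<Prod>k'\<in>{1..n}. \<Prod>I'\<in>E. G k' I')" unfolding urn_path_prob_def G_def ..
  show "h k I \<in> I"
  proof (rule ccontr)
    assume "h k I \<notin> I"
    then have "G k I = 0" unfolding G_def by simp
    then have "(\<Prod>I'\<in>E. G k I') = 0" using I by (intro prod_zero) auto
    then have "pp h n = 0" unfolding ppG using k by (intro prod_zero) auto
    then show False using assms by simp
  qed
qed

lemma denom_pos: assumes "good h n" "I \<in> E" shows "real (\<Sum>j\<in>I. cnt h n j) > 0"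
proof -
  have "(\<Sum>j\<in>I. real (cnt h n j)) \<ge> real n + 1" using cnt_edge_ge[OF assms] .
  moreover have "real (\<Sum>j\<in>I. cnt h n j) = (\<Sum>j\<in>I. real (cnt h n j))" by (rule of_nat_sum)
  ultimately show ?thesis by linarith
qed

lemma qq_sum: assumes "good h n" "I \<in> E" shows "(\<Sum>i\<in>UNIV. qq h n I i) = 1"
proof -
  have "(\<Sum>i\<in>UNIV. qq h n I i) = (\<Sum>i\<in>I. real (cnt h n i) / real (\<Sum>j\<in>I. cnt h n j))"
    unfolding qq_def by (simp add: sum.If_cases)
  also have "\<dots> = 1" using denom_pos[OF assms] by (simp add: sum_divide_distrib[symmetric] of_nat_sum)
  finally show ?thesis .
qed

lemma qq_eq: assumes "good h n" "I \<in> E" "i \<in> I"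
  shows "qq h n I i = xx h n $ i / vsum (xx h n) I"
  using assms tt_pos[of n] unfolding qq_def xx_nth vsum_xx by (simp add: of_nat_sum)

lemma pp_sum1: "(\<Sum>h\<in>HH n. pp h n) = 1"
proof (induction n)
  case 0 then show ?case by (simp add: HH_0 urn_path_prob_def)
next
  case (Suc n)
  have "(\<Sum>g\<in>HH (Suc n). pp g (Suc n)) = (\<Sum>h\<in>HH n. \<Sum>c\<in>CE. pp h n * (\<Prod>I\<in>E. qq h n I (c I)))"
    unfolding sum_HH_Suc pp_Suc ..
  also have "\<dots> = (\<Sum>h\<in>HH n. pp h n)"
  proof (intro sum.cong refl)
    fix h assume "h \<in> HH n"
    show "(\<Sum>c\<in>CE. pp h n * (\<Prod>I\<in>E. qq h n I (c I))) = pp h n"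
    proof (cases "pp h n = 0")
      case True then show ?thesis by simp
    next
      case False
      then have g: "good h n" by (rule pp_good)
      have "(\<Sum>c\<in>CE. (\<Prod>I\<in>E. qq h n I (c I))) = 1"
        using qq_sum[OF g] by (intro pie_total) auto
      then show ?thesis by (simp add: sum_distrib_left[symmetric])
    qed
  qed
  finally show ?case using Suc by simp
qed

definition xin where
  "xin h n c = (\<Sum>J\<in>E. sf (xx h n) (c J)) - (\<Sum>i\<in>UNIV. xx h n $ i * (sf (xx h n) i)^2)"

lemma xin_mean:
  assumes g: "good h n"
  shows "(\<Sum>c\<in>CE. (\<Prod>I\<in>E. qq h n I (c I)) * xin h n c) = 0"
proof -
  let ?v = "xx h n"
  let ?X = "(\<Sum>i\<in>UNIV. ?v $ i * (sf ?v i)^2)"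
  let ?P = "\<lambda>c. (\<Prod>I\<in>E. qq h n I (c I))"
  have q1: "\<forall>I\<in>E. (\<Sum>i\<in>UNIV. qq h n I i) = 1" using qq_sum[OF g] by auto
  have "(\<Sum>c\<in>CE. ?P c * xin h n c) = (\<Sum>c\<in>CE. (\<Sum>J\<in>E. ?P c * sf ?v (c J)) - ?P c * ?X)"
    unfolding xin_def by (simp only: right_diff_distrib sum_distrib_left)
  also have "\<dots> = (\<Sum>c\<in>CE. \<Sum>J\<in>E. ?P c * sf ?v (c J)) - (\<Sum>c\<in>CE. ?P c) * ?X"
    by (simp only: sum_subtractf sum_distrib_right)
  also have "(\<Sum>c\<in>CE. \<Sum>J\<in>E. ?P c * sf ?v (c J)) = (\<Sum>J\<in>E. \<Sum>c\<in>CE. ?P c * sf ?v (c J))"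
    by (rule sum.swap)
  also have "(\<Sum>c\<in>CE. ?P c) = 1" using q1 by (intro pie_total) auto
  also have "(\<Sum>J\<in>E. \<Sum>c\<in>CE. ?P c * sf ?v (c J)) = (\<Sum>J\<in>E. \<Sum>i\<in>UNIV. qq h n J i * sf ?v i)"
    using q1 by (intro sum.cong refl pie_marginal) auto
  also have "\<dots> = (\<Sum>J\<in>E. \<Sum>i\<in>J. ?v $ i * sf ?v i / vsum ?v J)"
  proof (rule sum.cong[OF refl])
    fix J assume J: "J \<in> E"
    have "(\<Sum>i\<in>UNIV. qq h n J i * sf ?v i) = (\<Sum>i\<in>UNIV. if i \<in> J then qq h n J i * sf ?v i else 0)"
      by (intro sum.cong refl) (simp add: qq_def)
    also have "\<dots> = (\<Sum>i\<in>J. qq h n J i * sf ?v i)" by (simp add: sum.If_cases)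
    also have "\<dots> = (\<Sum>i\<in>J. ?v $ i * sf ?v i / vsum ?v J)"
      using qq_eq[OF g J] by (intro sum.cong refl) auto
    finally show "(\<Sum>i\<in>UNIV. qq h n J i * sf ?v i) = (\<Sum>i\<in>J. ?v $ i * sf ?v i / vsum ?v J)" .
  qed
  also have "\<dots> = (\<Sum>i\<in>UNIV. \<Sum>J\<in>{J\<in>E. i\<in>J}. ?v $ i * sf ?v i / vsum ?v J)"
    by (rule sum_swap_incl[symmetric])
  also have "\<dots> = ?X"
    unfolding sf_def by (intro sum.cong refl) (simp add: sum_distrib_left power2_eq_square)
  finally show ?thesis by simp
qed

lemma xin_bound: assumes "good h n" shows "\<bar>xin h n c\<bar> \<le> KK"
proof -
  let ?v = "xx h n"
  have a0: "(\<Sum>J\<in>E. sf ?v (c J)) \<ge> 0" using sf_nonneg[OF assms] by (intro sum_nonneg) auto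
  have "(\<Sum>J\<in>E. sf ?v (c J)) \<le> (\<Sum>J\<in>E. NN / del)" using sf_le[OF assms] by (intro sum_mono) auto
  also have "\<dots> = NN^2 / del" unfolding NN_def by (simp add: power2_eq_square)
  also have "\<dots> \<le> NN^2 / del^2" using del_pos del_le1 NN_ge1
    by (intro divide_left_mono) (auto simp: power2_eq_square mult_le_cancel_left1)
  finally have a1: "(\<Sum>J\<in>E. sf ?v (c J)) \<le> KK" unfolding KK_def .
  have b0: "(\<Sum>i\<in>UNIV. ?v $ i * (sf ?v i)^2) \<ge> 0" using xx_nonneg by (intro sum_nonneg) auto
  have "(\<Sum>i\<in>UNIV. ?v $ i * (sf ?v i)^2) \<le> (\<Sum>i\<in>UNIV. ?v $ i * (NN/del)^2)"
    using xx_nonneg sf_nonneg[OF assms] sf_le[OF assms]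
    by (intro sum_mono mult_left_mono power_mono) auto
  also have "\<dots> = (NN/del)^2" using xx_sum[of h n] by (simp add: sum_distrib_right[symmetric])
  finally have b1: "(\<Sum>i\<in>UNIV. ?v $ i * (sf ?v i)^2) \<le> KK" unfolding KK_def by (simp add: power_divide)
  show ?thesis unfolding xin_def using a0 a1 b0 b1 by linarith
qed

lemma xx_dep: "\<forall>k\<in>{1..n}. \<forall>I\<in>E. h k I = h' k I \<Longrightarrow> xx h n = xx h' n"
  unfolding urn_x_def using cnt_dep by metis

lemma xi_dep:
  assumes "\<forall>k\<in>{1..Suc m}. \<forall>I\<in>E. h k I = h' k I"
  shows "xi h m = xi h' m"
proof -
  have "xx h m = xx h' m" using assms by (intro xx_dep) auto
  moreover have "\<forall>J\<in>E. h (Suc m) J = h' (Suc m) J" using assms by auto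
  ultimately show ?thesis unfolding xi_def by simp
qed

lemma Mg_dep:
  assumes "\<forall>k\<in>{1..n}. \<forall>I\<in>E. h k I = h' k I"
  shows "Mg h n = Mg h' n"
  unfolding Mg_def using assms by (intro sum.cong refl) (subst xi_dep[of _ h h']; auto)

lemma Sg_dep:
  assumes "\<forall>k\<in>{1..n}. \<forall>I\<in>E. h k I = h' k I"
  shows "Sg h n = Sg h' n"
  unfolding Sg_def using assms by (intro sum.cong refl) (subst xx_dep[of _ h h']; auto)

lemma good_dep:
  assumes "\<forall>k\<in>{1..n}. \<forall>I\<in>E. h k I = h' k I"
  shows "good h n = good h' n"
  unfolding good_def using assms by auto

lemma xi_ext: "xi (h(Suc n := c)) n = xin h n c"
proof -
  have "xx (h(Suc n := c)) n = xx h n" by (rule xx_dep) auto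
  then show ?thesis unfolding xi_def xin_def by simp
qed

lemma Mg_ext: "Mg (h(Suc n := c)) (Suc n) = Mg h n + xin h n c / tt (Suc n)"
proof -
  have "Mg (h(Suc n := c)) n = Mg h n" by (rule Mg_dep) auto
  then show ?thesis unfolding Mg_def using xi_ext by simp
qed

definition VV where "VV n = (\<Sum>h\<in>HH n. pp h n * (Mg h n)^2)"

lemma VV_step: "VV (Suc n) \<le> VV n + KK^2 / (tt (Suc n))^2"
proof -
  let ?t = "tt (Suc n)"
  let ?P = "\<lambda>h c. (\<Prod>I\<in>E. qq h n I (c I))"
  have inner: "(\<Sum>c\<in>CE. pp h n * ?P h c * (Mg h n + xin h n c / ?t)^2)
      \<le> pp h n * (Mg h n)^2 + pp h n * (KK^2 / ?t^2)" for h
  proof (cases "pp h n = 0")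
    case True then show ?thesis by simp
  next
    case False
    then have g: "good h n" by (rule pp_good)
    have q1: "\<forall>I\<in>E. (\<Sum>i\<in>UNIV. qq h n I i) = 1" using qq_sum[OF g] by auto
    have P1: "(\<Sum>c\<in>CE. ?P h c) = 1" using q1 by (intro pie_total) auto
    have P0: "(\<Sum>c\<in>CE. ?P h c * xin h n c) = 0" by (rule xin_mean[OF g])
    have Pnn: "?P h c \<ge> 0" for c by (intro prod_nonneg) (auto simp: qq_nonneg)
    have "(\<Sum>c\<in>CE. ?P h c * (xin h n c)^2) \<le> (\<Sum>c\<in>CE. ?P h c * KK^2)"
    proof (intro sum_mono mult_left_mono Pnn)
      fix c
      have "\<bar>xin h n c\<bar> \<le> KK" by (rule xin_bound[OF g])
      then show "(xin h n c)^2 \<le> KK^2" by (metis abs_ge_zero order_trans power2_abs power_mono)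
    qed
    also have "\<dots> = KK^2" using P1 by (simp add: sum_distrib_right[symmetric])
    finally have P2: "(\<Sum>c\<in>CE. ?P h c * (xin h n c)^2) \<le> KK^2" .
    have "(\<Sum>c\<in>CE. pp h n * ?P h c * (Mg h n + xin h n c / ?t)^2)
        = pp h n * ((Mg h n)^2 * (\<Sum>c\<in>CE. ?P h c) + (2 * Mg h n / ?t) * (\<Sum>c\<in>CE. ?P h c * xin h n c)
            + (1 / ?t^2) * (\<Sum>c\<in>CE. ?P h c * (xin h n c)^2))"
    proof -
      have pt: "pp h n * ?P h c * (Mg h n + xin h n c / ?t)^2
          = pp h n * ((Mg h n)^2 * ?P h c + (2 * Mg h n / ?t) * (?P h c * xin h n c)
            + (1 / ?t^2) * (?P h c * (xin h n c)^2))" for c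
        using tt_pos[of "Suc n"] by (simp add: power2_eq_square field_simps)
      show ?thesis unfolding pt by (simp only: sum_distrib_left[symmetric] sum.distrib)
    qed
    also have "\<dots> = pp h n * ((Mg h n)^2 + (1 / ?t^2) * (\<Sum>c\<in>CE. ?P h c * (xin h n c)^2))"
      unfolding P1 P0 by simp
    also have "\<dots> \<le> pp h n * ((Mg h n)^2 + (1 / ?t^2) * KK^2)"
      using P2 pp_nonneg[of h n] by (intro mult_left_mono add_left_mono) auto
    finally show ?thesis by (simp add: algebra_simps)
  qed
  have "VV (Suc n) = (\<Sum>h\<in>HH n. \<Sum>c\<in>CE. pp h n * ?P h c * (Mg h n + xin h n c / ?t)^2)"
    unfolding VV_def sum_HH_Suc pp_Suc Mg_ext ..
  also have "\<dots> \<le> (\<Sum>h\<in>HH n. pp h n * (Mg h n)^2 + pp h n * (KK^2 / ?t^2))"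
    by (intro sum_mono inner)
  also have "\<dots> = VV n + (\<Sum>h\<in>HH n. pp h n) * (KK^2 / ?t^2)" unfolding VV_def
    by (simp only: sum.distrib sum_distrib_right)
  also have "\<dots> = VV n + KK^2 / ?t^2" unfolding pp_sum1 by simp
  finally show ?thesis .
qed

lemma VV_bound: "VV n \<le> 2 * KK^2"
proof -
  have "VV n \<le> KK^2 * (\<Sum>k<n. 1 / (tt (Suc k))^2)"
  proof (induction n)
    case 0 then show ?case by (simp add: VV_def HH_0 Mg_def)
  next
    case (Suc n) then show ?case using VV_step[of n] by (simp add: algebra_simps)
  qed
  also have "\<dots> \<le> KK^2 * 2" using inv_tt_sq[of n] by (intro mult_left_mono) auto
  finally show ?thesis by simp
qed

end

locale urn_prob = urn B0 E + prob_space M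
  for B0 :: "'v::finite \<Rightarrow> nat" and E and M :: "'w measure" +
  fixes ch :: "nat \<Rightarrow> 'w \<Rightarrow> 'v set \<Rightarrow> 'v"
  assumes meas: "\<forall>k\<ge>1. \<forall>I\<in>E. (\<lambda>\<omega>. ch k \<omega> I) \<in> measurable M (count_space UNIV)"
    and law: "\<forall>n h. measure M {\<omega> \<in> space M. \<forall>k\<in>{1..n}. \<forall>I\<in>E. ch k \<omega> I = h k I}
               = urn_path_prob B0 E h n"
begin

abbreviation chw where "chw \<omega> \<equiv> (\<lambda>k. ch k \<omega>)"

definition cyl where "cyl n h = {\<omega> \<in> space M. \<forall>k\<in>{1..n}. \<forall>I\<in>E. ch k \<omega> I = h k I}"

lemma cyl_sets: "cyl n h \<in> sets M"
  unfolding cyl_def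
proof (intro sets.sets_Collect_finite_All)
  fix k I assume k: "k \<in> {1..n}" and I: "I \<in> E"
  have "(\<lambda>\<omega>. ch k \<omega> I) \<in> measurable M (count_space UNIV)" using meas k I by auto
  then have "(\<lambda>\<omega>. ch k \<omega> I) -` {h k I} \<inter> space M \<in> sets M" by (rule measurable_sets) auto
  moreover have "{\<omega> \<in> space M. ch k \<omega> I = h k I} = (\<lambda>\<omega>. ch k \<omega> I) -` {h k I} \<inter> space M" by auto
  ultimately show "{\<omega> \<in> space M. ch k \<omega> I = h k I} \<in> sets M" by simp
qed auto

lemma cyl_measure: "measure M (cyl n h) = pp h n"
  unfolding cyl_def using law by auto

lemma event_eq:
  assumes T: "T \<subseteq> HH n"
  shows "{\<omega> \<in> space M. rs n (chw \<omega>) \<in> T} = (\<Union>h\<in>T. cyl n h)"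
proof -
  have "rs n (chw \<omega>) \<in> T \<longleftrightarrow> (\<exists>h\<in>T. \<forall>k\<in>{1..n}. \<forall>I\<in>E. ch k \<omega> I = h k I)" for \<omega>
  proof
    assume "rs n (chw \<omega>) \<in> T"
    then show "\<exists>h\<in>T. \<forall>k\<in>{1..n}. \<forall>I\<in>E. ch k \<omega> I = h k I"
      using rs_agree[of n "chw \<omega>"] by (intro bexI[of _ "rs n (chw \<omega>)"]) auto
  next
    assume "\<exists>h\<in>T. \<forall>k\<in>{1..n}. \<forall>I\<in>E. ch k \<omega> I = h k I"
    then obtain h where h: "h \<in> T" "\<forall>k\<in>{1..n}. \<forall>I\<in>E. ch k \<omega> I = h k I" by blast
    then have "rs n (chw \<omega>) = h" using T rs_eq_iff[of h n "chw \<omega>"] by auto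
    then show "rs n (chw \<omega>) \<in> T" using h by simp
  qed
  then show ?thesis unfolding cyl_def by auto
qed

lemma event_sets_measure:
  assumes T: "T \<subseteq> HH n"
  shows "{\<omega> \<in> space M. rs n (chw \<omega>) \<in> T} \<in> sets M"
    and "measure M {\<omega> \<in> space M. rs n (chw \<omega>) \<in> T} = (\<Sum>h\<in>T. pp h n)"
proof -
  have fin: "finite T" using T HH_finite finite_subset by blast
  have disj: "disjoint_family_on (cyl n) T"
    unfolding disjoint_family_on_def
  proof (intro ballI impI)
    fix h h' assume h: "h \<in> T" and h': "h' \<in> T" and ne: "h \<noteq> h'"
    show "cyl n h \<inter> cyl n h' = {}"
    proof (rule ccontr)
      assume "cyl n h \<inter> cyl n h' \<noteq> {}"
      then obtain \<omega> where "\<omega> \<in> cyl n h" "\<omega> \<in> cyl n h'" by blast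
      then have "rs n (chw \<omega>) = h" "rs n (chw \<omega>) = h'"
        using rs_eq_iff[of h n "chw \<omega>"] rs_eq_iff[of h' n "chw \<omega>"] h h' T unfolding cyl_def by auto
      then show False using ne by simp
    qed
  qed
  show "{\<omega> \<in> space M. rs n (chw \<omega>) \<in> T} \<in> sets M"
    unfolding event_eq[OF T] using fin cyl_sets by blast
  have "measure M (\<Union>h\<in>T. cyl n h) = (\<Sum>h\<in>T. measure M (cyl n h))"
    using fin disj cyl_sets by (intro finite_measure_finite_Union) auto
  then show "measure M {\<omega> \<in> space M. rs n (chw \<omega>) \<in> T} = (\<Sum>h\<in>T. pp h n)"
    unfolding event_eq[OF T] cyl_measure .
qed

lemma rs_agree': "\<forall>k\<in>{1..n}. \<forall>I\<in>E. chw \<omega> k I = rs n (chw \<omega>) k I"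
  using rs_agree by metis

lemma AE_good: "AE \<omega> in M. \<forall>n. good (chw \<omega>) n"
proof (subst AE_all_countable, intro allI)
  fix n
  define T where "T = {h\<in>HH n. \<not> good h n}"
  have T: "T \<subseteq> HH n" unfolding T_def by auto
  let ?N = "{\<omega> \<in> space M. rs n (chw \<omega>) \<in> T}"
  have "measure M ?N = (\<Sum>h\<in>T. pp h n)" by (rule event_sets_measure(2)[OF T])
  also have "\<dots> = 0" unfolding T_def using pp_good by (intro sum.neutral) blast
  finally have "?N \<in> null_sets M" using event_sets_measure(1)[OF T] by (auto simp: null_sets_def emeasure_eq_measure)
  moreover have "{\<omega> \<in> space M. \<not> good (chw \<omega>) n} \<subseteq> ?N"
    unfolding T_def using good_dep[OF rs_agree'] rs_in by blast
  ultimately show "AE \<omega> in M. good (chw \<omega>) n" by (rule AE_I')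
qed

definition Aset where "Aset a n = {\<omega> \<in> space M. \<not> good (chw \<omega>) n \<or> Sg (chw \<omega>) n > a}"

lemma Aset_eq: "Aset a n = {\<omega> \<in> space M. rs n (chw \<omega>) \<in> {h\<in>HH n. \<not> good h n \<or> Sg h n > a}}"
  unfolding Aset_def using good_dep[OF rs_agree'] Sg_dep[OF rs_agree'] rs_in by auto

lemma Aset_sets: "Aset a n \<in> sets M"
  unfolding Aset_eq by (rule event_sets_measure(1)) auto

lemma Aset_measure:
  assumes a: "a > CC"
  shows "measure M (Aset a n) \<le> 2 * KK^2 / (a - CC)^2"
proof -
  define T where "T = {h\<in>HH n. \<not> good h n \<or> Sg h n > a}"
  have T: "T \<subseteq> HH n" unfolding T_def by auto
  have ac: "(a - CC)^2 > 0" using a by simp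
  have "measure M (Aset a n) = (\<Sum>h\<in>T. pp h n)" unfolding Aset_eq T_def[symmetric]
    by (rule event_sets_measure(2)[OF T])
  also have "\<dots> \<le> (\<Sum>h\<in>T. pp h n * (Mg h n)^2 / (a - CC)^2)"
  proof (intro sum_mono)
    fix h assume h: "h \<in> T"
    show "pp h n \<le> pp h n * (Mg h n)^2 / (a - CC)^2"
    proof (cases "pp h n = 0")
      case True then show ?thesis by simp
    next
      case False
      then have g: "good h n" by (rule pp_good)
      then have "Sg h n > a" using h unfolding T_def by auto
      moreover have "Sg h n \<le> CC - Mg h n" by (rule Sg_bound[OF g])
      ultimately have "a - CC < - Mg h n" by linarith
      then have "(a - CC)^2 \<le> (Mg h n)^2" using a
        by (metis less_eq_real_def neg_0_le_iff_le power2_minus power_mono diff_ge_0_iff_ge order.strict_implies_order)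
      then have "1 \<le> (Mg h n)^2 / (a - CC)^2" using ac by simp
      then show ?thesis using pp_nonneg[of h n] by (metis mult_le_cancel_left1 not_less pp_nonneg times_divide_eq_right)
    qed
  qed
  also have "\<dots> \<le> (\<Sum>h\<in>HH n. pp h n * (Mg h n)^2 / (a - CC)^2)"
    using T HH_finite pp_nonneg by (intro sum_mono2) auto
  also have "\<dots> = VV n / (a - CC)^2" unfolding VV_def by (simp add: sum_divide_distrib)
  also have "\<dots> \<le> 2 * KK^2 / (a - CC)^2" using VV_bound ac by (intro divide_right_mono) auto
  finally show ?thesis .
qed

lemma Aset_incseq: "incseq (Aset a)"
proof (rule incseq_SucI)
  fix n show "Aset a n \<subseteq> Aset a (Suc n)"
  proof
    fix \<omega> assume w: "\<omega> \<in> Aset a n"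
    show "\<omega> \<in> Aset a (Suc n)"
    proof (cases "good (chw \<omega>) (Suc n)")
      case False then show ?thesis using w unfolding Aset_def by auto
    next
      case True
      then have "good (chw \<omega>) n" by (rule good_mono) auto
      then have "Sg (chw \<omega>) n > a" "Sg (chw \<omega>) n \<le> Sg (chw \<omega>) (Suc n)" using w Sg_mono unfolding Aset_def by auto
      then show ?thesis using w unfolding Aset_def by auto
    qed
  qed
qed

definition Yset where "Yset a = (\<Union>n. Aset a n)"

lemma Yset_sets: "Yset a \<in> sets M" unfolding Yset_def using Aset_sets by blast

lemma Yset_measure:
  assumes a: "a > CC"
  shows "measure M (Yset a) \<le> 2 * KK^2 / (a - CC)^2"
proof -
  have "(\<lambda>n. measure M (Aset a n)) \<longlonglongrightarrow> measure M (\<Union>n. Aset a n)"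
    using Aset_sets Aset_incseq by (intro finite_Lim_measure_incseq) auto
  then show ?thesis unfolding Yset_def
    by (rule LIMSEQ_le_const2) (use Aset_measure[OF a] in auto)
qed

definition Zset where "Zset = (\<Inter>j. Yset (CC + real j + 1))"

lemma Zset_null: "Zset \<in> null_sets M"
proof -
  have Zs: "Zset \<in> sets M" unfolding Zset_def using Yset_sets by blast
  have le: "measure M Zset \<le> 2 * KK^2 / (real j + 1)" for j
  proof -
    have "measure M Zset \<le> measure M (Yset (CC + real j + 1))"
      unfolding Zset_def using Yset_sets by (intro finite_measure_mono) auto
    also have "\<dots> \<le> 2 * KK^2 / (real j + 1)^2" using Yset_measure[of "CC + real j + 1"] by simp
    also have "\<dots> \<le> 2 * KK^2 / (real j + 1)"
      by (intro divide_left_mono) (auto simp: power2_eq_square)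
    finally show ?thesis .
  qed
  have "measure M Zset = 0"
  proof (rule ccontr)
    assume "measure M Zset \<noteq> 0"
    then have pos: "measure M Zset > 0" using measure_nonneg[of M Zset] by linarith
    obtain j :: nat where j: "real j \<ge> 2 * KK^2 / measure M Zset" using real_arch_simple by blast
    have "2 * KK^2 / (real j + 1) < measure M Zset"
    proof -
      have "2 * KK^2 < (real j + 1) * measure M Zset" using j pos by (simp add: field_simps)
      then show ?thesis by (simp add: field_simps)
    qed
    then show False using le[of j] by linarith
  qed
  then show ?thesis using Zs by (auto simp: null_sets_def emeasure_eq_measure)
qed

lemma main_AE:
  assumes c: "0 < c" "c < 1 / NN"
  shows "AE \<omega> in M. limit_set (xx (chw \<omega>)) \<subseteq> Lambda E c \<and> connected (limit_set (xx (chw \<omega>)))"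
proof -
  have "AE \<omega> in M. \<omega> \<notin> Zset" by (rule AE_I'[OF Zset_null]) auto
  moreover note AE_good
  moreover have "AE \<omega> in M. \<omega> \<in> space M" by simp
  ultimately show ?thesis
  proof eventually_elim
    case (elim \<omega>)
    then obtain j where "\<omega> \<notin> Yset (CC + real j + 1)" unfolding Zset_def by blast
    then have "\<forall>n. \<omega> \<notin> Aset (CC + real j + 1) n" unfolding Yset_def by blast
    have B: "\<forall>n. Sg (chw \<omega>) n \<le> CC + real j + 1"
    proof
      fix n
      have "\<omega> \<notin> Aset (CC + real j + 1) n" using \<open>\<forall>n. \<omega> \<notin> Aset (CC + real j + 1) n\<close> by blast
      then have "\<not> (CC + real j + 1 < Sg (chw \<omega>) n)" using elim unfolding Aset_def by blast
      then show "Sg (chw \<omega>) n \<le> CC + real j + 1" by simp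
    qed
    show ?case using det_main[OF c _ B] elim by blast
  qed
qed

end

theorem proposition2p4:
  fixes M :: "'w measure"
    and E :: "('v::finite) set set"
    and B0 :: "'v \<Rightarrow> nat"
    and ch :: "nat \<Rightarrow> 'w \<Rightarrow> 'v set \<Rightarrow> 'v"
    and c :: real
  assumes "prob_space M"
    and "E \<noteq> {}"
    and "\<forall>I\<in>E. I \<noteq> {}"
    and "\<forall>i. \<exists>I\<in>E. i \<in> I"
    and "\<forall>i. B0 i \<ge> 1"
    and "0 < c" and "c < 1 / real (card E)"
    and "\<forall>k\<ge>1. \<forall>I\<in>E. (\<lambda>\<omega>. ch k \<omega> I) \<in> measurable M (count_space UNIV)"
    and "\<forall>n h. measure M {\<omega> \<in> space M. \<forall>k\<in>{1..n}. \<forall>I\<in>E. ch k \<omega> I = h k I}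
               = urn_path_prob B0 E h n"
  shows "AE \<omega> in M. limit_set (\<lambda>n. urn_x B0 E (\<lambda>k. ch k \<omega>) n) \<subseteq> Lambda E c
                  \<and> connected (limit_set (\<lambda>n. urn_x B0 E (\<lambda>k. ch k \<omega>) n))"
proof -
  interpret urn_prob B0 E M ch
    using assms by (intro urn_prob.intro urn.intro urn_prob_axioms.intro) auto
  have c': "c < 1 / NN" using assms(7) unfolding NN_def .
  show ?thesis using main_AE[OF assms(6) c'] by simp
qed

end
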